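(* For every $z\in\mathbb{C}\setminus[0,\infty)$ and every $x\in\mathbb{Z}_+$, $$\psi_z(x)=e^{-z}\sum_{k=0}^{x}(-1)^k\binom{x}{k}E_{k+1}(-z).$$
   Context: $\mathbb{Z}_+=\{0,1,2,\dots\}$. $L_0$ is the operator on $\ell^2(\mathbb{Z}_+)$ given by $$L_0v(x)=-(x+1)v(x+1)+(2x+1)v(x)-xv(x-1)\quad (x>0),\qquad L_0v(0)=-v(1)+v(0),$$ with domain $\{v:\sum_x x^2|v(x)|^2<\infty\}$. $\overline{L_0}$ is its self-adjoint closure, whose spectrum is $[0,\infty)$. $\chi_0$ is the indicator of the site $0$, and $\psi_z:=(\overline{L_0}-z)^{-1}\chi_0$ is the resolvent vector. For $p\in\mathbb{C}$ and $w\in\mathbb{C}\setminus(-\infty,0]$, the generalized exponential integral is $E_p(w)=w^{p-1}\int_w^\infty e^{-t}t^{-p}\,\mathrm{d}t$, taken on the principal branch with cut $(-\infty,0]$. *)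

theory Defs
  imports "HOL-Analysis.Analysis"
begin

definition in_l2 :: "(nat \<Rightarrow> complex) \<Rightarrow> bool" where
  "in_l2 v \<longleftrightarrow> summable (\<lambda>x. (norm (v x))^2)"

definition l2_norm2 :: "(nat \<Rightarrow> complex) \<Rightarrow> real" where
  "l2_norm2 v = (\<Sum>x. (norm (v x))^2)"

definition L0 :: "(nat \<Rightarrow> complex) \<Rightarrow> nat \<Rightarrow> complex" where
  "L0 v x = (if x = 0 then - v 1 + v 0
             else - of_nat (x+1) * v (x+1) + of_nat (2*x+1) * v x - of_nat x * v (x-1))"

definition L0_dom :: "(nat \<Rightarrow> complex) set" where
  "L0_dom = {v. in_l2 v \<and> summable (\<lambda>x. (real x)^2 * (norm (v x))^2)}"

definition L0_closure_graph :: "(nat \<Rightarrow> complex) \<Rightarrow> (nat \<Rightarrow> complex) \<Rightarrow> bool" where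
  "L0_closure_graph v w \<longleftrightarrow> in_l2 v \<and> in_l2 w \<and>
     (\<exists>u :: nat \<Rightarrow> nat \<Rightarrow> complex. (\<forall>n. u n \<in> L0_dom) \<and>
        (\<lambda>n. l2_norm2 (\<lambda>x. u n x - v x)) \<longlonglongrightarrow> 0 \<and>
        (\<lambda>n. l2_norm2 (\<lambda>x. L0 (u n) x - w x)) \<longlonglongrightarrow> 0)"

definition chi0 :: "nat \<Rightarrow> complex" where
  "chi0 x = (if x = 0 then 1 else 0)"

text \<open>Resolvent vector psi_z = (closure L0 - z)^{-1} chi0, i.e. the unique v with
  closure(L0) v = chi0 + z v.\<close>

definition psi :: "complex \<Rightarrow> nat \<Rightarrow> complex" where
  "psi z = (THE v. L0_closure_graph v (\<lambda>x. chi0 x + z * v x))"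

text \<open>Generalized exponential integral E_p(w) = w^(p-1) \<integral>_w^\<infinity> e^(-t) t^(-p) dt,
  principal branch, integrating along the horizontal ray t = w + s, s \<ge> 0
  (which avoids the cut (-\<infinity>,0] whenever w does).\<close>

definition expint_E :: "complex \<Rightarrow> complex \<Rightarrow> complex" where
  "expint_E p w = w powr (p - 1) *
     integral {0..} (\<lambda>s::real. exp (- (w + of_real s)) * (w + of_real s) powr (- p))"

end

theory Submission
  imports Defs "HOL-Real_Asymp.Real_Asymp"
begin


lemma mono_int: "((\<lambda>t::real. t^k * exp (-t)) has_integral fact k) {0..}"
proof -
  have "((\<lambda>t. t powr (real (Suc k) - 1) / exp t) has_integral Gamma (real (Suc k))) {0..}"
    by (rule Gamma_integral_real) simp
  moreover have "Gamma (real (Suc k)) = fact k"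
    using Gamma_fact[of k] by (simp add: add.commute)
  ultimately have *: "((\<lambda>t. t powr (real k) / exp t) has_integral fact k) {0..}" by simp
  show ?thesis
  proof (rule has_integral_spike_finite[of "{0}" _ _ "\<lambda>t. t powr (real k) / exp t"])
    fix t :: real assume "t \<in> {0..} - {0}"
    then have "t > 0" by auto
    then show "t ^ k * exp (- t) = t powr real k / exp t"
      by (simp add: powr_realpow exp_minus divide_inverse)
  qed (use * in auto)
qed

lemma poly_exp_int: "((\<lambda>t::real. (1+t)^N * exp (-t)) integrable_on {0..})"
proof -
  have "(\<lambda>t::real. (\<Sum>k\<le>N. of_nat (N choose k) * (t^k * exp (-t)))) integrable_on {0..}"
    by (intro integrable_sum integrable_on_mult_right ballI finite_atMost has_integral_integrable[OF mono_int])
  moreover have "(\<Sum>k\<le>N. of_nat (N choose k) * (t^k * exp (-t))) = (1+t)^N * exp (-t)" for t :: real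
  proof -
    have "(1+t)^N = (\<Sum>k\<le>N. of_nat (N choose k) * t^k)"
      using binomial_ring[of t 1 N] by (simp add: add.commute mult.commute)
    then show ?thesis by (simp add: sum_distrib_right mult.assoc)
  qed
  ultimately show ?thesis by simp
qed

lemma abs_int_bound:
  fixes g :: "real \<Rightarrow> complex"
  assumes "continuous_on {0..} g" "\<And>t. t \<ge> 0 \<Longrightarrow> norm (g t) \<le> C * ((1+t)^N * exp (-t))"
  shows "g absolutely_integrable_on {0..}"
proof (rule measurable_bounded_by_integrable_imp_absolutely_integrable)
  show "g \<in> borel_measurable (lebesgue_on {0..})"
    by (rule continuous_imp_measurable_on_sets_lebesgue) (use assms in auto)
  show "(\<lambda>t. C * ((1+t)^N * exp (-t))) integrable_on {0..}"
    by (rule integrable_on_mult_right[OF poly_exp_int])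
qed (use assms in auto)

lemma abs_int_integrable: fixes g :: "real \<Rightarrow> complex" shows "g absolutely_integrable_on S \<Longrightarrow> g integrable_on S"
  by (rule set_lebesgue_integral_eq_integral(1))



lemma improper_ftc:
  fixes g F :: "real \<Rightarrow> complex"
  assumes g: "g absolutely_integrable_on {0..}"
    and cont: "continuous_on {0..} F"
    and der: "\<And>t. t > 0 \<Longrightarrow> (F has_vector_derivative g t) (at t)"
    and lim: "(F \<longlongrightarrow> 0) at_top"
  shows "(g has_integral (- F 0)) {0..}"
proof -
  define f where "f = (\<lambda>k::nat. \<lambda>t::real. if t \<in> {0..real k} then g t else 0)"
  have fi: "(f k has_integral (F (real k) - F 0)) {0..}" for k
  proof -
    have "(g has_integral (F (real k) - F 0)) {0..real k}"
      by (rule fundamental_theorem_of_calculus_interior)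
         (auto intro: der continuous_on_subset[OF cont])
    then show ?thesis unfolding f_def by (subst has_integral_restrict) auto
  qed
  have h: "(\<lambda>t. norm (g t)) integrable_on {0..}"
    using g absolutely_integrable_on_def by blast
  have bd: "\<forall>t\<in>{0..}. norm (f k t) \<le> norm (g t)" for k
    by (auto simp: f_def)
  have pw: "\<forall>t\<in>{0..}. (\<lambda>k. f k t) \<longlonglongrightarrow> g t"
  proof
    fix t :: real assume t: "t \<in> {0..}"
    have "eventually (\<lambda>k. real k \<ge> t) sequentially"
      by (meson eventually_sequentiallyI nat_ceiling_le_eq)
    then have "eventually (\<lambda>k. f k t = g t) sequentially"
      by eventually_elim (use t in \<open>auto simp: f_def\<close>)
    then show "(\<lambda>k. f k t) \<longlonglongrightarrow> g t"
      by (rule tendsto_eventually)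
  qed
  have "(\<lambda>k. F (real k)) \<longlonglongrightarrow> 0"
    using filterlim_compose[OF lim filterlim_real_sequentially] .
  then have yl: "(\<lambda>k. F (real k) - F 0) \<longlonglongrightarrow> 0 - F 0"
    by (intro tendsto_intros)
  show ?thesis
    using has_integral_dominated_convergence[OF fi h bd pw yl] by simp
qed



lemma dist_lb:
  assumes "z \<notin> complex_of_real ` {0..}"
  obtains \<delta> where "\<delta> > 0" "\<And>t. t \<ge> 0 \<Longrightarrow> \<delta> \<le> norm (of_real t - z)"
proof (cases "Im z = 0")
  case True
  have "Re z < 0"
  proof (rule ccontr)
    assume "\<not> Re z < 0"
    then have "z = complex_of_real (Re z)" "Re z \<in> {0..}" using True by (auto simp: complex_eq_iff)
    then show False using assms by blast
  qed
  show ?thesis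
  proof (rule that[of "- Re z"])
    fix t :: real assume "t \<ge> 0"
    have "- Re z \<le> Re (of_real t - z)" using \<open>t \<ge> 0\<close> by simp
    also have "\<dots> \<le> norm (of_real t - z)" by (rule complex_Re_le_cmod)
    finally show "- Re z \<le> norm (of_real t - z)" .
  qed (use \<open>Re z < 0\<close> in auto)
next
  case False
  show ?thesis
  proof (rule that[of "\<bar>Im z\<bar>"])
    fix t :: real
    have "\<bar>Im z\<bar> = \<bar>Im (of_real t - z)\<bar>" by simp
    also have "\<dots> \<le> norm (of_real t - z)" by (rule abs_Im_le_cmod)
    finally show "\<bar>Im z\<bar> \<le> norm (of_real t - z)" .
  qed (use False in auto)
qed

lemma nz_den: "z \<notin> complex_of_real ` {0..} \<Longrightarrow> t \<ge> 0 \<Longrightarrow> complex_of_real t - z \<noteq> 0"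
  by auto

lemma integral_cmult_c:
  fixes f :: "real \<Rightarrow> 'a::{real_normed_field,banach}"
  shows "integral S (\<lambda>x. c * f x) = c * integral S f"
proof (cases "c = 0")
  case False
  show ?thesis
  proof (cases "f integrable_on S")
    case True
    then show ?thesis by (intro integral_unique has_integral_mult_right integrable_integral)
  next
    case nf: False
    then have "\<not> (\<lambda>x. c * f x) integrable_on S" using False by simp
    then show ?thesis using nf by (simp add: not_integrable_integral)
  qed
qed simp

definition gc :: "complex \<Rightarrow> nat \<Rightarrow> nat \<Rightarrow> complex \<Rightarrow> complex" where
  "gc z a b w = exp (- w) * w ^ a / (w - z) ^ b"

definition g :: "complex \<Rightarrow> nat \<Rightarrow> nat \<Rightarrow> real \<Rightarrow> complex" where
  "g z a b t = gc z a b (of_real t)"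

definition V :: "complex \<Rightarrow> nat \<Rightarrow> complex" where
  "V z x = integral {0..} (g z x (x+1))"

lemma norm_exp_mof: "norm (exp (- complex_of_real t)) = exp (- t)"
  by (simp add: norm_exp_eq_Re)

lemma g_cont: "z \<notin> complex_of_real ` {0..} \<Longrightarrow> continuous_on {0..} (g z a b)"
  unfolding g_def gc_def
  by (intro continuous_intros) (auto dest: nz_den)

lemma g_bound:
  assumes "\<delta> > 0" "\<And>t. t \<ge> 0 \<Longrightarrow> \<delta> \<le> norm (of_real t - z)" "t \<ge> 0"
  shows "norm (g z a b t) \<le> (1 / \<delta>^b) * ((1+t)^a * exp (-t))"
proof -
  have d: "\<delta>^b \<le> norm (of_real t - z) ^ b"
    using assms by (intro power_mono) auto
  have "norm (g z a b t) = exp (-t) * t^a / norm (of_real t - z) ^ b"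
    using assms(3) by (simp add: g_def gc_def norm_mult norm_divide norm_power norm_exp_mof)
  also have "\<dots> \<le> exp (-t) * t^a / \<delta>^b"
  proof (rule divide_left_mono)
    show "0 < norm (of_real t - z) ^ b * \<delta>^b"
    proof -
      have "0 < norm (of_real t - z)" using assms(1) assms(2)[OF assms(3)] by linarith
      then show ?thesis using assms(1) by simp
    qed
  qed (use d assms(3) in auto)
  also have "\<dots> \<le> exp (-t) * (1+t)^a / \<delta>^b"
    using assms by (intro divide_right_mono mult_left_mono power_mono) auto
  finally show ?thesis by (simp add: field_simps)
qed

lemma g_absint:
  assumes "z \<notin> complex_of_real ` {0..}"
  shows "g z a b absolutely_integrable_on {0..}"
proof -
  obtain \<delta> where d: "\<delta> > 0" "\<And>t. t \<ge> 0 \<Longrightarrow> \<delta> \<le> norm (of_real t - z)"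
    using dist_lb[OF assms] by blast
  show ?thesis
    by (rule abs_int_bound[OF g_cont[OF assms] g_bound[OF d]])
qed

lemma g_int: "z \<notin> complex_of_real ` {0..} \<Longrightarrow> g z a b integrable_on {0..}"
  by (rule abs_int_integrable[OF g_absint])

lemma expint_eq:
  assumes z: "z \<notin> complex_of_real ` {0..}"
  shows "expint_E (of_nat (k+1)) (- z) = (- z)^k * (exp z * integral {0..} (g z 0 (k+1)))"
proof -
  have z0: "z \<noteq> 0" using z by force
  have "(- z) powr (of_nat (k+1) - 1) = (- z)^k"
    using z0 by (simp add: powr_nat')
  moreover have "integral {0..} (\<lambda>s. exp (- (- z + complex_of_real s)) * (- z + complex_of_real s) powr (- of_nat (k+1)))
      = integral {0..} (\<lambda>s. exp z * g z 0 (k+1) s)"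
  proof (rule integral_cong)
    fix s :: real assume "s \<in> {0..}"
    then have nz: "complex_of_real s - z \<noteq> 0" using nz_den[OF z] by auto
    have "(- z + complex_of_real s) powr (- of_nat (k+1)) = inverse ((complex_of_real s - z)^(k+1))"
      using nz by (simp add: powr_minus powr_nat' del: of_nat_Suc)
    then show "exp (- (- z + complex_of_real s)) * (- z + complex_of_real s) powr (- of_nat (k+1))
      = exp z * g z 0 (k+1) s"
      by (simp add: g_def gc_def exp_add exp_diff exp_minus divide_inverse mult_ac del: of_nat_Suc)
  qed
  ultimately show ?thesis
    unfolding expint_E_def
    by (simp add: integral_cmult_c del: of_nat_Suc)
qed

lemma m1sq: "(-1::complex)^k * (-1)^k = 1"
  by (simp add: power_mult_distrib[symmetric])

lemma binom_pt:
  assumes nz: "complex_of_real t - z \<noteq> 0"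
  shows "(\<Sum>k\<le>x. of_nat (x choose k) * z^k * g z 0 (k+1) t) = g z x (x+1) t"
proof -
  let ?w = "complex_of_real t"
  have "(\<Sum>k\<le>x. of_nat (x choose k) * z^k * g z 0 (k+1) t)
      = exp (- ?w) / (?w - z) * (\<Sum>k\<le>x. of_nat (x choose k) * (z / (?w - z))^k * 1^(x-k))"
    by (simp add: sum_distrib_left g_def gc_def power_divide field_simps)
  also have "(\<Sum>k\<le>x. of_nat (x choose k) * (z / (?w - z))^k * 1^(x-k)) = (z / (?w - z) + 1)^x"
    by (rule binomial_ring[symmetric])
  also have "z / (?w - z) + 1 = ?w / (?w - z)"
    using nz by (simp add: field_simps)
  finally show ?thesis
    using nz by (simp add: g_def gc_def power_divide field_simps)
qed

lemma rhs_eq_V: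
  assumes z: "z \<notin> complex_of_real ` {0..}"
  shows "exp (- z) * (\<Sum>k\<le>x. (-1)^k * of_nat (x choose k) * expint_E (of_nat (k+1)) (- z)) = V z x"
proof -
  have "exp (- z) * (\<Sum>k\<le>x. (-1)^k * of_nat (x choose k) * expint_E (of_nat (k+1)) (- z))
      = (\<Sum>k\<le>x. of_nat (x choose k) * z^k * integral {0..} (g z 0 (k+1)))"
    unfolding sum_distrib_left
  proof (rule sum.cong[OF refl])
    fix k assume "k \<in> {..x}"
    have "exp (- z) * exp z = 1" by (simp add: exp_minus)
    then show "exp (- z) * ((-1)^k * of_nat (x choose k) * expint_E (of_nat (k+1)) (- z))
        = of_nat (x choose k) * z^k * integral {0..} (g z 0 (k+1))"
      unfolding expint_eq[OF z] power_minus[of z k]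
      by (simp add: mult_ac m1sq)
  qed
  also have "\<dots> = integral {0..} (\<lambda>t. \<Sum>k\<le>x. of_nat (x choose k) * z^k * g z 0 (k+1) t)"
    by (subst integral_sum) (auto simp: integral_cmult_c integrable_on_mult_right g_int[OF z])
  also have "\<dots> = V z x"
    unfolding V_def
    by (rule integral_cong) (use binom_pt nz_den[OF z] in auto)
  finally show ?thesis .
qed



lemma gc_deriv_raw:
  assumes "w - z \<noteq> 0"
  shows "(gc z x (x+1) has_field_derivative
     (exp (- w) * (of_nat x * w^(x-1) - w^x) / (w-z)^(x+1) - of_nat (x+1) * exp (- w) * w^x / (w-z)^(x+2))) (at w)"
  unfolding gc_def
  apply (rule DERIV_cong)
   apply (rule derivative_intros)+
  using assms apply simp
  apply (subgoal_tac "\<exists>r. w = z + r \<and> r \<noteq> 0")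
   apply (elim exE conjE)
  apply (simp add: field_simps)
  using assms by (intro exI[of _ "w - z"]) auto

definition Gc :: "complex \<Rightarrow> nat \<Rightarrow> complex \<Rightarrow> complex" where
  "Gc z x w = - of_nat (x+1) * gc z (x+1) (x+2) w + (of_nat (2*x+1) - z) * gc z x (x+1) w
              - of_nat x * gc z (x-1) x w"

lemma Gc_alg:
  assumes "w - z \<noteq> 0"
  shows "z * (exp (- w) * (of_nat x * w^(x-1) - w^x) / (w-z)^(x+1) - of_nat (x+1) * exp (- w) * w^x / (w-z)^(x+2))
     = Gc z x w"
proof -
  obtain r where w: "w = z + r" and r: "r \<noteq> 0" using assms by (intro that[of "w - z"]) auto
  define e where "e = exp (- w)"
  show ?thesis
  proof (cases x)
    case 0
    then show ?thesis unfolding Gc_def gc_def e_def[symmetric] unfolding w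
      using r by (simp add: field_simps)
  next
    case (Suc m)
    then show ?thesis unfolding Gc_def gc_def e_def[symmetric] unfolding w
      using r by (simp add: field_simps)
  qed
qed

lemma F_lim:
  assumes z: "z \<notin> complex_of_real ` {0..}"
  shows "((\<lambda>t. z * g z a b t) \<longlongrightarrow> 0) at_top"
proof -
  obtain \<delta> where d: "\<delta> > 0" "\<And>t. t \<ge> 0 \<Longrightarrow> \<delta> \<le> norm (of_real t - z)"
    using dist_lb[OF z] by blast
  have ev: "eventually (\<lambda>t. norm (z * g z a b t) \<le> norm z * ((1 / \<delta>^b) * ((1+t)^a * exp (-t)))) at_top"
    using eventually_ge_at_top[of "0::real"]
  proof eventually_elim
    case (elim t)
    show ?case unfolding norm_mult by (rule mult_left_mono[OF g_bound[OF d elim]]) auto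
  qed
  have "((\<lambda>t::real. (1+t)^a * exp (-t)) \<longlongrightarrow> 0) at_top"
    by real_asymp
  then have "((\<lambda>t::real. norm z * ((1 / \<delta>^b) * ((1+t)^a * exp (-t)))) \<longlongrightarrow> norm z * ((1 / \<delta>^b) * 0)) at_top"
    by (intro tendsto_intros)
  then show ?thesis
    using Lim_null_comparison[OF ev] by simp
qed

lemma integral_lin3:
  fixes a b c :: "real \<Rightarrow> 'a::{real_normed_field,banach}"
  assumes "a integrable_on S" "b integrable_on S" "c integrable_on S"
  shows "integral S (\<lambda>t. p * a t + q * b t - r * c t) = p * integral S a + q * integral S b - r * integral S c"
proof -
  have i: "(\<lambda>t. p * a t) integrable_on S" "(\<lambda>t. q * b t) integrable_on S" "(\<lambda>t. r * c t) integrable_on S"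
    using assms by (auto intro: integrable_on_mult_right)
  have "integral S (\<lambda>t. p * a t + q * b t - r * c t) = integral S (\<lambda>t. p * a t + q * b t) - integral S (\<lambda>t. r * c t)"
    by (rule integral_diff[OF integrable_add[OF i(1,2)] i(3)])
  also have "integral S (\<lambda>t. p * a t + q * b t) = integral S (\<lambda>t. p * a t) + integral S (\<lambda>t. q * b t)"
    by (rule integral_add[OF i(1,2)])
  finally show ?thesis by (simp add: integral_cmult_c)
qed

lemma V_rec_int:
  assumes z: "z \<notin> complex_of_real ` {0..}"
  shows "- of_nat (x+1) * V z (x+1) + (of_nat (2*x+1) - z) * V z x - of_nat x * V z (x-1) = chi0 x"
proof -
  define G where "G = (\<lambda>t. - of_nat (x+1) * g z (x+1) (x+2) t + (of_nat (2*x+1) - z) * g z x (x+1) t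
              - of_nat x * g z (x-1) x t)"
  have Gabs: "G absolutely_integrable_on {0..}"
    unfolding G_def
    by (intro set_integral_diff(1) set_integral_add(1) set_integrable_mult_right g_absint[OF z])
  have "(G has_integral (- (z * g z x (x+1) 0))) {0..}"
  proof (rule improper_ftc[OF Gabs])
    show "continuous_on {0..} (\<lambda>t. z * g z x (x+1) t)"
      by (intro continuous_intros g_cont[OF z])
    show "((\<lambda>t. z * g z x (x+1) t) \<longlongrightarrow> 0) at_top" by (rule F_lim[OF z])
    fix t :: real assume t: "t > 0"
    have nz: "complex_of_real t - z \<noteq> 0" using nz_den[OF z, of t] t by auto
    have "((\<lambda>w. z * gc z x (x+1) w) has_field_derivative z * (exp (- of_real t) * (of_nat x * of_real t^(x-1) - of_real t^x) / (of_real t-z)^(x+1) - of_nat (x+1) * exp (- of_real t) * of_real t^x / (of_real t-z)^(x+2))) (at (of_real t))"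
      by (intro DERIV_cmult gc_deriv_raw nz)
    then have "((\<lambda>w. z * gc z x (x+1) w) has_field_derivative G t) (at (of_real t))"
      unfolding Gc_alg[OF nz] by (simp add: G_def Gc_def g_def)
    then show "((\<lambda>t. z * g z x (x+1) t) has_vector_derivative G t) (at t)"
      unfolding g_def by (rule has_vector_derivative_real_field)
  qed
  then have "integral {0..} G = - (z * g z x (x+1) 0)" by (rule integral_unique)
  moreover have "integral {0..} G = - of_nat (x+1) * V z (x+1) + (of_nat (2*x+1) - z) * V z x - of_nat x * V z (x-1)"
  proof -
    have "integral {0..} G = - of_nat (x+1) * integral {0..} (g z (x+1) (x+2)) + (of_nat (2*x+1) - z) * integral {0..} (g z x (x+1))
              - of_nat x * integral {0..} (g z (x-1) x)"
      unfolding G_def by (rule integral_lin3) (auto intro: g_int[OF z])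
    then show ?thesis unfolding V_def by (cases x) auto
  qed
  moreover have "- (z * g z x (x+1) 0) = chi0 x"
  proof -
    have "z \<noteq> 0" using z by force
    then show ?thesis by (cases x) (auto simp: g_def gc_def chi0_def)
  qed
  ultimately show ?thesis by simp
qed

lemma V_rec:
  assumes z: "z \<notin> complex_of_real ` {0..}"
  shows "L0 (V z) x = chi0 x + z * V z x"
  using V_rec_int[OF z, of x]
  by (cases x) (auto simp: L0_def chi0_def algebra_simps)



lemma binom_rec_real:
  "real (n+1) * real (Suc n choose k) + real n * real ((n-1) choose k) = real (2*n+1) * real (n choose k) + (if k = 0 then 0 else real k * real (n choose (k-1)))"
proof (cases k)
  case 0
  then show ?thesis by simp
next
  case (Suc j)
  have P: "real (Suc n choose Suc j) = real (n choose j) + real (n choose Suc j)" by simp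
  have Q: "(real n - real (Suc j)) * real (n choose Suc j) = real n * real ((n-1) choose Suc j)"
  proof (cases "Suc j \<le> n")
    case True
    then have "real (n - Suc j) = real n - real (Suc j)" by simp
    with binomial_absorb_comp[of n "Suc j"] show ?thesis
      by (metis of_nat_mult)
  qed (simp add: binomial_eq_0)
  have R: "real (Suc j) * real (n choose Suc j) = (real n - real j) * real (n choose j)"
  proof (cases "j \<le> n")
    case True
    then have "real (n - j) = real n - real j" by simp
    with binomial_absorb_comp[of n j] binomial_absorption[of j n] show ?thesis
      by (metis of_nat_mult)
  qed (simp add: binomial_eq_0)
  show ?thesis using P Q R Suc
    by (simp add: algebra_simps)
qed

definition cf :: "nat \<Rightarrow> nat \<Rightarrow> real" where
  "cf n k = (-1)^k * real (n choose k) / fact k"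

definition lag :: "nat \<Rightarrow> real \<Rightarrow> real" where
  "lag n t = (\<Sum>k\<le>n. cf n k * t^k)"

lemma cf_rec:
  "real (n+1) * cf (n+1) k = real (2*n+1) * cf n k - (if k = 0 then 0 else cf n (k-1)) - real n * cf (n-1) k"
proof -
  have B: "real (n+1) * real (Suc n choose k) = real (2*n+1) * real (n choose k) + (if k = 0 then 0 else real k * real (n choose (k-1))) - real n * real ((n-1) choose k)"
    using binom_rec_real[of n k] by linarith
  show ?thesis
  proof (cases k)
    case 0
    then show ?thesis using B by (simp add: cf_def)
  next
    case (Suc j)
    have "real (n+1) * cf (n+1) k = (-1)^k / fact k * (real (n+1) * real (Suc n choose k))"
      by (simp add: cf_def)
    also have "\<dots> = (-1)^k / fact k * (real (2*n+1) * real (n choose k) + real k * real (n choose j) - real n * real ((n-1) choose k))"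
      using B Suc by simp
    also have "\<dots> = real (2*n+1) * cf n k - cf n j - real n * cf (n-1) k"
    proof -
      have f: "fact k = (1 + real j) * fact j" "(-1::real)^k = - ((-1)^j)" using Suc by (simp_all add: fact_Suc)
      have nz: "(1 + real j) \<noteq> 0" "fact j \<noteq> (0::real)" "fact j + fact j * real j \<noteq> (0::real)"
      proof -
        have "fact j + fact j * real j = fact j * (1 + real j)" by (simp add: algebra_simps)
        moreover have "fact j * (1 + real j) > 0" by (intro mult_pos_pos) auto
        ultimately show "(1 + real j) \<noteq> 0" "fact j \<noteq> (0::real)" "fact j + fact j * real j \<noteq> (0::real)"
          by simp_all
      qed
      have "(-1)^k / fact k * (real k * real (n choose j)) = - cf n j"
        unfolding f using Suc nz by (simp add: cf_def field_simps)
      then show ?thesis by (simp add: cf_def algebra_simps diff_divide_distrib add_divide_distrib)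
    qed
    finally show ?thesis using Suc by simp
  qed
qed

lemma cf_zero: "n < k \<Longrightarrow> cf n k = 0"
  by (simp add: cf_def)

lemma lag_ext: "n < N \<Longrightarrow> lag n t = (\<Sum>k<N. cf n k * t^k)"
  unfolding lag_def
  by (rule sum.mono_neutral_left) (auto simp: cf_zero)

lemma lag_0 [simp]: "lag 0 t = 1"
  by (simp add: lag_def cf_def)

lemma lag_shift: "t * lag n t = (\<Sum>k<n+2. (if k = 0 then 0 else cf n (k-1)) * t^k)"
proof -
  have e: "n+2 = Suc (n+1)" by simp
  have "(\<Sum>k<n+2. (if k = 0 then 0 else cf n (k-1)) * t^k) = (\<Sum>k<n+1. cf n k * t^(Suc k))"
    unfolding e sum.lessThan_Suc_shift by simp
  also have "\<dots> = t * lag n t"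
    unfolding lag_def sum_distrib_left
    by (rule sum.cong) (auto simp: lessThan_Suc_atMost)
  finally show ?thesis ..
qed

lemma lag_rec:
  "real (n+1) * lag (n+1) t = (real (2*n+1) - t) * lag n t - real n * lag (n-1) t"
proof -
  have "lag (n+1) t = (\<Sum>k<n+2. cf (n+1) k * t^k)" by (rule lag_ext) simp
  then have "real (n+1) * lag (n+1) t = (\<Sum>k<n+2. real (n+1) * cf (n+1) k * t^k)"
    by (simp only: sum_distrib_left mult.assoc)
  also have "\<dots> = (\<Sum>k<n+2. real (2*n+1) * cf n k * t^k - (if k = 0 then 0 else cf n (k-1)) * t^k - real n * cf (n-1) k * t^k)"
  proof (rule sum.cong[OF refl])
    fix k assume "k \<in> {..<n+2}"
    show "real (n+1) * cf (n+1) k * t^k = real (2*n+1) * cf n k * t^k - (if k = 0 then 0 else cf n (k-1)) * t^k - real n * cf (n-1) k * t^k"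
    proof -
      have "real (n+1) * cf (n+1) k * t^k = (real (2*n+1) * cf n k - (if k = 0 then 0 else cf n (k-1)) - real n * cf (n-1) k) * t^k"
        using cf_rec[of n k] by simp
      then show ?thesis by (simp only: left_diff_distrib)
    qed
  qed
  also have "\<dots> = real (2*n+1) * (\<Sum>k<n+2. cf n k * t^k) - (\<Sum>k<n+2. (if k = 0 then 0 else cf n (k-1)) * t^k) - real n * (\<Sum>k<n+2. cf (n-1) k * t^k)"
    by (simp only: sum_subtractf sum_distrib_left mult.assoc)
  also have "(\<Sum>k<n+2. cf n k * t^k) = lag n t" by (rule lag_ext[symmetric]) simp
  also have "(\<Sum>k<n+2. cf (n-1) k * t^k) = lag (n-1) t" by (rule lag_ext[symmetric]) simp
  also have "(\<Sum>k<n+2. (if k = 0 then 0 else cf n (k-1)) * t^k) = t * lag n t" by (rule lag_shift[symmetric])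
  finally show ?thesis by (simp add: algebra_simps)
qed

lemma lag_bound: "t \<ge> 0 \<Longrightarrow> \<bar>lag n t\<bar> \<le> (1+t)^n"
proof -
  assume t: "t \<ge> 0"
  have "\<bar>lag n t\<bar> \<le> (\<Sum>k\<le>n. \<bar>cf n k * t^k\<bar>)"
    unfolding lag_def by (rule sum_abs)
  also have "\<dots> \<le> (\<Sum>k\<le>n. real (n choose k) * t^k)"
  proof (rule sum_mono)
    fix k
    have "fact k \<ge> (1::real)" by simp
    then have "real (n choose k) / fact k \<le> real (n choose k) / 1"
      by (intro divide_left_mono) auto
    then have "real (n choose k) / fact k * t^k \<le> real (n choose k) / 1 * t^k"
      by (rule mult_right_mono) (use t in auto)
    then show "\<bar>cf n k * t^k\<bar> \<le> real (n choose k) * t^k"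
      using t by (simp add: cf_def abs_mult abs_divide)
  qed
  also have "\<dots> = (1+t)^n"
    using binomial_ring[of t 1 n] by (simp add: add.commute mult.commute)
  finally show ?thesis .
qed

lemma lag_cont: "continuous_on S (lag n)"
  unfolding lag_def by (intro continuous_intros)

lemma abs_int_bound_r:
  fixes g :: "real \<Rightarrow> real"
  assumes "continuous_on {0..} g" "\<And>t. t \<ge> 0 \<Longrightarrow> \<bar>g t\<bar> \<le> C * ((1+t)^N * exp (-t))"
  shows "g integrable_on {0..}"
proof -
  have "g absolutely_integrable_on {0..}"
  proof (rule measurable_bounded_by_integrable_imp_absolutely_integrable)
    show "g \<in> borel_measurable (lebesgue_on {0..})"
      by (rule continuous_imp_measurable_on_sets_lebesgue) (use assms in auto)
    show "(\<lambda>t. C * ((1+t)^N * exp (-t))) integrable_on {0..}"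
      by (rule integrable_on_mult_right[OF poly_exp_int])
  qed (use assms in auto)
  then show ?thesis by (rule set_lebesgue_integral_eq_integral(1))
qed

lemma lag_int: "(\<lambda>t. t^a * lag m t * lag n t * exp (-t)) integrable_on {0..}"
proof (rule abs_int_bound_r[where C=1 and N="a+m+n"])
  show "continuous_on {0..} (\<lambda>t. t^a * lag m t * lag n t * exp (-t))"
    by (intro continuous_intros lag_cont)
  fix t :: real assume t: "t \<ge> 0"
  have "\<bar>t^a * lag m t * lag n t * exp (-t)\<bar> = t^a * \<bar>lag m t\<bar> * \<bar>lag n t\<bar> * exp (-t)"
    using t by (simp add: abs_mult)
  also have "\<dots> \<le> (1+t)^a * (1+t)^m * (1+t)^n * exp (-t)"
    using t by (intro mult_right_mono mult_mono power_mono lag_bound) auto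
  finally show "\<bar>t^a * lag m t * lag n t * exp (-t)\<bar> \<le> 1 * ((1+t)^(a+m+n) * exp (-t))"
    by (simp add: power_add)
qed



definition Gm :: "nat \<Rightarrow> nat \<Rightarrow> real" where
  "Gm m n = integral {0..} (\<lambda>t. lag m t * lag n t * exp (-t))"

definition Mm :: "nat \<Rightarrow> nat \<Rightarrow> real" where
  "Mm m n = integral {0..} (\<lambda>t. t * lag m t * lag n t * exp (-t))"

lemma lag_int0: "(\<lambda>t. lag m t * lag n t * exp (-t)) integrable_on {0..}"
  using lag_int[of 0 m n] by simp

lemma lag_int1: "(\<lambda>t. t * lag m t * lag n t * exp (-t)) integrable_on {0..}"
  using lag_int[of 1 m n] by simp

lemma Gm_sym: "Gm m n = Gm n m"
  unfolding Gm_def by (simp add: mult_ac)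

lemma Mm_sym: "Mm m n = Mm n m"
  unfolding Mm_def by (simp add: mult_ac)

lemma Gm_0: "Gm 0 n = (if n = 0 then 1 else 0)"
proof -
  have "((\<lambda>t. \<Sum>k\<le>n. cf n k * (t^k * exp (-t))) has_integral (\<Sum>k\<le>n. cf n k * fact k)) {0..}"
    by (intro has_integral_sum finite_atMost has_integral_mult_right mono_int)
  moreover have "(\<lambda>t. \<Sum>k\<le>n. cf n k * (t^k * exp (-t))) = (\<lambda>t. lag 0 t * lag n t * exp (-t))"
    by (auto simp: lag_def[of n] sum_distrib_left mult_ac)
  ultimately have "Gm 0 n = (\<Sum>k\<le>n. cf n k * fact k)"
    unfolding Gm_def by (simp add: integral_unique)
  also have "\<dots> = (\<Sum>k\<le>n. (-1)^k * real (n choose k))"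
    by (simp add: cf_def)
  also have "\<dots> = (if n = 0 then 1 else 0)"
    using choose_alternating_sum[of n] by auto
  finally show ?thesis .
qed

lemma Mm_rec: "Mm m n = - real (m+1) * Gm (m+1) n + real (2*m+1) * Gm m n - real m * Gm (m-1) n"
proof -
  have "Mm m n = integral {0..} (\<lambda>t. - real (m+1) * (lag (m+1) t * lag n t * exp (-t)) + real (2*m+1) * (lag m t * lag n t * exp (-t))
           - real m * (lag (m-1) t * lag n t * exp (-t)))"
    unfolding Mm_def
  proof (rule integral_cong)
    fix t :: real
    have eq: "t * lag m t = - real (m+1) * lag (m+1) t + real (2*m+1) * lag m t - real m * lag (m-1) t"
      using lag_rec[of m t] by (simp add: algebra_simps)
    show "t * lag m t * lag n t * exp (-t) = - real (m+1) * (lag (m+1) t * lag n t * exp (-t)) + real (2*m+1) * (lag m t * lag n t * exp (-t))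
           - real m * (lag (m-1) t * lag n t * exp (-t))"
      by (subst eq) (simp add: algebra_simps)
  qed
  also have "\<dots> = - real (m+1) * Gm (m+1) n + real (2*m+1) * Gm m n - real m * Gm (m-1) n"
    unfolding Gm_def by (rule integral_lin3) (rule lag_int0)+
  finally show ?thesis .
qed

lemma Gm_ortho: "Gm m n = (if m = n then 1 else 0)"
proof (induction m arbitrary: n rule: less_induct)
  case (less m)
  show ?case
  proof (cases m)
    case 0
    then show ?thesis by (simp add: Gm_0)
  next
    case (Suc p)
    have IHp: "Gm p k = (if p = k then 1 else 0)" for k using less Suc by simp
    have IHp1: "Gm (p-1) k = (if p-1 = k then 1 else 0)" for k using less Suc by simp
    have "Mm p n = Mm n p" by (rule Mm_sym)
    also have "\<dots> = - real (n+1) * Gm p (n+1) + real (2*n+1) * Gm p n - real n * Gm p (n-1)"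
      by (simp add: Mm_rec Gm_sym[of _ p])
    finally have M1: "Mm p n = - real (n+1) * (if p = n+1 then 1 else 0) + real (2*n+1) * (if p = n then 1 else 0) - real n * (if p = n-1 then 1 else 0)"
      by (simp add: IHp)
    have M2: "Mm p n = - real (p+1) * Gm (p+1) n + real (2*p+1) * (if p = n then 1 else 0) - real p * (if p-1 = n then 1 else 0)"
      using Mm_rec[of p n] IHp[of n] IHp1[of n] by simp
    have "real (p+1) * Gm (p+1) n = real (p+1) * (if p+1 = n then 1 else 0)"
      using M1 M2 by (auto split: if_splits)
    then show ?thesis using Suc by (simp del: of_nat_Suc)
  qed
qed



lemma bessel:
  fixes h :: "real \<Rightarrow> real"
  assumes cont: "continuous_on {0..} h" and bd: "\<And>t. t \<ge> 0 \<Longrightarrow> \<bar>h t\<bar> \<le> K"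
  shows "(\<Sum>x<N. (integral {0..} (\<lambda>t. lag x t * exp (-t) * h t))^2) \<le> integral {0..} (\<lambda>t. (h t)^2 * exp (-t))"
proof -
  define a where "a x = integral {0..} (\<lambda>t. lag x t * exp (-t) * h t)" for x
  have K: "K \<ge> 0" using bd[of 0] by simp
  have I1: "(\<lambda>t. lag x t * exp (-t) * h t) integrable_on {0..}" for x
  proof (rule abs_int_bound_r[where C=K and N=x])
    show "continuous_on {0..} (\<lambda>t. lag x t * exp (-t) * h t)"
      by (intro continuous_intros lag_cont cont)
    fix t :: real assume t: "t \<ge> 0"
    have "\<bar>lag x t * exp (-t) * h t\<bar> = \<bar>lag x t\<bar> * exp (-t) * \<bar>h t\<bar>" by (simp add: abs_mult)
    also have "\<dots> \<le> (1+t)^x * exp (-t) * K"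
      using t K by (intro mult_mono lag_bound bd) auto
    finally show "\<bar>lag x t * exp (-t) * h t\<bar> \<le> K * ((1+t)^x * exp (-t))" by (simp add: mult_ac)
  qed
  have I2: "(\<lambda>t. (h t)^2 * exp (-t)) integrable_on {0..}"
  proof (rule abs_int_bound_r[where C="K^2" and N=0])
    show "continuous_on {0..} (\<lambda>t. (h t)^2 * exp (-t))"
      by (intro continuous_intros cont)
    fix t :: real assume t: "t \<ge> 0"
    have "\<bar>h t\<bar>^2 \<le> K^2" using bd[OF t] by (intro power_mono) auto
    then show "\<bar>(h t)^2 * exp (-t)\<bar> \<le> K^2 * ((1+t)^0 * exp (-t))" by (simp add: abs_mult)
  qed
  define S where "S t = (\<Sum>x<N. a x * lag x t)" for t
  have H1: "((\<lambda>t. (h t)^2 * exp (-t)) has_integral integral {0..} (\<lambda>t. (h t)^2 * exp (-t))) {0..}"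
    using I2 by (rule integrable_integral)
  have H2: "((\<lambda>t. \<Sum>x<N. a x * (lag x t * exp (-t) * h t)) has_integral (\<Sum>x<N. a x * a x)) {0..}"
    unfolding a_def by (intro has_integral_sum finite_lessThan has_integral_mult_right integrable_integral I1)
  have H3: "((\<lambda>t. \<Sum>x<N. \<Sum>y<N. a x * a y * (lag x t * lag y t * exp (-t))) has_integral (\<Sum>x<N. \<Sum>y<N. a x * a y * Gm x y)) {0..}"
    unfolding Gm_def by (intro has_integral_sum finite_lessThan has_integral_mult_right integrable_integral lag_int0)
  have H: "((\<lambda>t. (h t)^2 * exp (-t) - 2 * (\<Sum>x<N. a x * (lag x t * exp (-t) * h t)) + (\<Sum>x<N. \<Sum>y<N. a x * a y * (lag x t * lag y t * exp (-t))))
     has_integral (integral {0..} (\<lambda>t. (h t)^2 * exp (-t)) - 2 * (\<Sum>x<N. a x * a x) + (\<Sum>x<N. \<Sum>y<N. a x * a y * Gm x y))) {0..}"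
    by (intro has_integral_add has_integral_diff has_integral_mult_right H1 H2 H3)
  have eqf: "(h t)^2 * exp (-t) - 2 * (\<Sum>x<N. a x * (lag x t * exp (-t) * h t)) + (\<Sum>x<N. \<Sum>y<N. a x * a y * (lag x t * lag y t * exp (-t)))
      = (h t - S t)^2 * exp (-t)" for t
  proof -
    have "(S t)^2 * exp (-t) = (\<Sum>x<N. \<Sum>y<N. (a x * lag x t) * (a y * lag y t)) * exp (-t)"
      unfolding S_def power2_eq_square sum_product ..
    also have "\<dots> = (\<Sum>x<N. \<Sum>y<N. (a x * lag x t) * (a y * lag y t) * exp (-t))"
      by (simp add: sum_distrib_right)
    finally have "(\<Sum>x<N. \<Sum>y<N. a x * a y * (lag x t * lag y t * exp (-t))) = (S t)^2 * exp (-t)"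
      by (simp add: mult_ac)
    moreover have "(\<Sum>x<N. a x * (lag x t * exp (-t) * h t)) = S t * h t * exp (-t)"
      unfolding S_def sum_distrib_right by (intro sum.cong refl) (simp add: mult_ac)
    ultimately show ?thesis by (simp add: power2_eq_square algebra_simps)
  qed
  have G: "(\<Sum>x<N. \<Sum>y<N. a x * a y * Gm x y) = (\<Sum>x<N. a x * a x)"
    by (simp add: Gm_ortho if_distrib cong: if_cong)
  have "((\<lambda>t. (h t - S t)^2 * exp (-t)) has_integral (integral {0..} (\<lambda>t. (h t)^2 * exp (-t)) - (\<Sum>x<N. a x * a x))) {0..}"
    using H unfolding eqf G by simp
  moreover have "0 \<le> integral {0..} (\<lambda>t. (h t - S t)^2 * exp (-t))"
    using calculation by (intro integral_nonneg) (auto simp: has_integral_integrable)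
  ultimately have "(\<Sum>x<N. a x * a x) \<le> integral {0..} (\<lambda>t. (h t)^2 * exp (-t))"
    by (simp add: integral_unique)
  then show ?thesis by (simp add: a_def power2_eq_square)
qed



definition fr :: "complex \<Rightarrow> real \<Rightarrow> complex" where
  "fr z t = 1 / (complex_of_real t - z)"

definition wi :: "complex \<Rightarrow> nat \<Rightarrow> real \<Rightarrow> complex" where
  "wi z x t = complex_of_real (lag x t * exp (-t)) * fr z t"

definition W :: "complex \<Rightarrow> nat \<Rightarrow> complex" where
  "W z x = integral {0..} (wi z x)"

lemma fr_cont: "z \<notin> complex_of_real ` {0..} \<Longrightarrow> continuous_on {0..} (fr z)"
  unfolding fr_def by (intro continuous_intros) (auto dest: nz_den)

lemma fr_bound:
  assumes "\<delta> > 0" "\<And>t. t \<ge> 0 \<Longrightarrow> \<delta> \<le> norm (of_real t - z)" "t \<ge> 0"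
  shows "norm (fr z t) \<le> 1 / \<delta>"
proof -
  have "norm (fr z t) = 1 / norm (of_real t - z)" by (simp add: fr_def norm_divide)
  also have "\<dots> \<le> 1 / \<delta>"
  proof (rule divide_left_mono)
    have "0 < norm (of_real t - z)" using assms(1) assms(2)[OF assms(3)] by linarith
    then show "0 < norm (of_real t - z) * \<delta>" using assms(1) by simp
  qed (use assms in auto)
  finally show ?thesis .
qed

lemma wi_int:
  assumes z: "z \<notin> complex_of_real ` {0..}"
  shows "wi z x integrable_on {0..}"
proof -
  obtain \<delta> where d: "\<delta> > 0" "\<And>t. t \<ge> 0 \<Longrightarrow> \<delta> \<le> norm (of_real t - z)"
    using dist_lb[OF z] by blast
  have "wi z x absolutely_integrable_on {0..}"
  proof (rule abs_int_bound[where C="1/\<delta>" and N=x])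
    show "continuous_on {0..} (wi z x)"
      unfolding wi_def by (intro continuous_intros lag_cont fr_cont[OF z])
    fix t :: real assume t: "t \<ge> 0"
    have "norm (wi z x t) = \<bar>lag x t\<bar> * exp (-t) * norm (fr z t)"
      by (simp add: wi_def norm_mult abs_mult)
    also have "\<dots> \<le> (1+t)^x * exp (-t) * (1/\<delta>)"
      using t d by (intro mult_mono lag_bound fr_bound[OF d]) auto
    finally show "norm (wi z x t) \<le> 1/\<delta> * ((1+t)^x * exp (-t))" by (simp add: mult_ac)
  qed
  then show ?thesis by (rule abs_int_integrable)
qed

lemma lag_exp_integral: "integral {0..} (\<lambda>t. lag x t * exp (-t)) = (if x = 0 then 1 else 0)"
  using Gm_0[of x] unfolding Gm_def by simp

lemma W_rec_int:
  assumes z: "z \<notin> complex_of_real ` {0..}"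
  shows "- of_nat (x+1) * W z (x+1) + (of_nat (2*x+1) - z) * W z x - of_nat x * W z (x-1) = chi0 x"
proof -
  have "- of_nat (x+1) * W z (x+1) + (of_nat (2*x+1) - z) * W z x - of_nat x * W z (x-1)
      = integral {0..} (\<lambda>t. - of_nat (x+1) * wi z (x+1) t + (of_nat (2*x+1) - z) * wi z x t - of_nat x * wi z (x-1) t)"
    unfolding W_def by (rule integral_lin3[symmetric]) (rule wi_int[OF z])+
  also have "\<dots> = integral {0..} (\<lambda>t. complex_of_real (lag x t * exp (-t)))"
  proof (rule integral_cong)
    fix t :: real assume t: "t \<in> {0..}"
    then have nz: "complex_of_real t - z \<noteq> 0" using nz_den[OF z] by auto
    have r: "- real (x+1) * lag (x+1) t + real (2*x+1) * lag x t - real x * lag (x-1) t = t * lag x t"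
      using lag_rec[of x t] by (simp add: algebra_simps)
    have r': "- of_nat (x+1) * complex_of_real (lag (x+1) t) + of_nat (2*x+1) * complex_of_real (lag x t) - of_nat x * complex_of_real (lag (x-1) t)
        = complex_of_real t * complex_of_real (lag x t)"
      using arg_cong[OF r, of complex_of_real] by simp
    have "- of_nat (x+1) * wi z (x+1) t + (of_nat (2*x+1) - z) * wi z x t - of_nat x * wi z (x-1) t
       = (- of_nat (x+1) * complex_of_real (lag (x+1) t) + of_nat (2*x+1) * complex_of_real (lag x t) - of_nat x * complex_of_real (lag (x-1) t)
          - z * complex_of_real (lag x t)) * complex_of_real (exp (-t)) * fr z t"
      by (simp add: wi_def algebra_simps)
    also have "\<dots> = complex_of_real (lag x t) * complex_of_real (exp (-t)) * ((complex_of_real t - z) * fr z t)"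
      unfolding r' by (simp add: algebra_simps)
    also have "\<dots> = complex_of_real (lag x t * exp (-t))"
      using nz by (simp add: fr_def)
    finally show "- of_nat (x+1) * wi z (x+1) t + (of_nat (2*x+1) - z) * wi z x t - of_nat x * wi z (x-1) t
       = complex_of_real (lag x t * exp (-t))" .
  qed
  also have "\<dots> = complex_of_real (integral {0..} (\<lambda>t. lag x t * exp (-t)))"
  proof -
    have "((\<lambda>t. lag x t * exp (-t)) has_integral integral {0..} (\<lambda>t. lag x t * exp (-t))) {0..}"
      using lag_int0[of 0 x] by (intro integrable_integral) simp
    from has_integral_of_real[OF this] show ?thesis by (rule integral_unique)
  qed
  also have "\<dots> = chi0 x" by (simp add: lag_exp_integral chi0_def)
  finally show ?thesis .
qed

lemma V_eq_W:
  assumes z: "z \<notin> complex_of_real ` {0..}"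
  shows "V z x = W z x"
proof -
  have base: "V z 0 = W z 0"
    unfolding V_def W_def
  proof (rule integral_cong)
    fix t :: real assume "t \<in> {0..}"
    show "g z 0 (0+1) t = wi z 0 t"
      by (simp add: g_def gc_def wi_def fr_def exp_of_real[symmetric])
  qed
  have step: "V z (x+1) = W z (x+1)" if "V z x = W z x" "V z (x-1) = W z (x-1)" for x
  proof -
    have "of_nat (x+1) * V z (x+1) = of_nat (x+1) * W z (x+1)"
      using V_rec_int[OF z, of x] W_rec_int[OF z, of x] that by (simp add: algebra_simps)
    then show ?thesis by (simp del: of_nat_Suc)
  qed
  have "V z n = W z n \<and> V z (n+1) = W z (n+1)" for n
  proof (induction n)
    case 0
    then show ?case using base step[of 0] by simp
  next
    case (Suc n)
    then show ?case using step[of "n+1"] by simp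
  qed
  then show ?thesis by blast
qed

lemma W_l2:
  assumes z: "z \<notin> complex_of_real ` {0..}"
  shows "summable (\<lambda>x. (norm (W z x))^2)"
proof (rule summableI_nonneg_bounded)
  obtain \<delta> where d: "\<delta> > 0" "\<And>t. t \<ge> 0 \<Longrightarrow> \<delta> \<le> norm (of_real t - z)"
    using dist_lb[OF z] by blast
  let ?hR = "\<lambda>t. Re (fr z t)" and ?hI = "\<lambda>t. Im (fr z t)"
  have ReW: "Re (W z x) = integral {0..} (\<lambda>t. lag x t * exp (-t) * ?hR t)" for x
  proof -
    have "((\<lambda>t. Re (wi z x t)) has_integral Re (W z x)) {0..}"
      unfolding W_def by (intro has_integral_Re integrable_integral wi_int[OF z])
    then show ?thesis by (simp add: wi_def integral_unique[symmetric])
  qed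
  have ImW: "Im (W z x) = integral {0..} (\<lambda>t. lag x t * exp (-t) * ?hI t)" for x
  proof -
    have "((\<lambda>t. Im (wi z x t)) has_integral Im (W z x)) {0..}"
      unfolding W_def by (intro has_integral_Im integrable_integral wi_int[OF z])
    then show ?thesis by (simp add: wi_def integral_unique[symmetric])
  qed
  have bR: "\<bar>?hR t\<bar> \<le> 1/\<delta>" if "t \<ge> 0" for t
    using abs_Re_le_cmod[of "fr z t"] fr_bound[OF d that] by linarith
  have bI: "\<bar>?hI t\<bar> \<le> 1/\<delta>" if "t \<ge> 0" for t
    using abs_Im_le_cmod[of "fr z t"] fr_bound[OF d that] by linarith
  have cR: "continuous_on {0..} ?hR" by (intro continuous_intros fr_cont[OF z])
  have cI: "continuous_on {0..} ?hI" by (intro continuous_intros fr_cont[OF z])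
  fix N
  have "(\<Sum>x<N. (norm (W z x))^2) = (\<Sum>x<N. (Re (W z x))^2) + (\<Sum>x<N. (Im (W z x))^2)"
    by (simp add: cmod_power2 sum.distrib)
  also have "\<dots> \<le> integral {0..} (\<lambda>t. (?hR t)^2 * exp (-t)) + integral {0..} (\<lambda>t. (?hI t)^2 * exp (-t))"
    unfolding ReW ImW by (intro add_mono bessel[OF cR bR] bessel[OF cI bI]) auto
  finally show "(\<Sum>x<N. (norm (W z x))^2) \<le> integral {0..} (\<lambda>t. (?hR t)^2 * exp (-t)) + integral {0..} (\<lambda>t. (?hI t)^2 * exp (-t))" .
qed simp



lemma sq_add_le: "(norm (a + b :: complex))^2 \<le> 2 * (norm a)^2 + 2 * (norm b)^2"
proof -
  have "norm (a + b) \<le> norm a + norm b" by (rule norm_triangle_ineq)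
  then have "(norm (a+b))^2 \<le> (norm a + norm b)^2" by (intro power_mono) auto
  also have "\<dots> \<le> 2 * (norm a)^2 + 2 * (norm b)^2"
    using sum_squares_ge_zero[of "norm a - norm b" 0] by (simp add: power2_eq_square algebra_simps)
  finally show ?thesis .
qed

lemma sq_diff_le: "(norm (a - b :: complex))^2 \<le> 2 * (norm a)^2 + 2 * (norm b)^2"
  using sq_add_le[of a "-b"] by simp

lemma sq_add3_le: "(x + y + w :: real)^2 \<le> 3 * (x^2 + y^2 + w^2)"
  using sum_squares_ge_zero[of "x - y" "y - w"] sum_squares_ge_zero[of "x - w" 0]
  by (simp add: power2_eq_square algebra_simps)

lemma in_l2_add: "in_l2 a \<Longrightarrow> in_l2 b \<Longrightarrow> in_l2 (\<lambda>x. a x + b x)"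
  unfolding in_l2_def
proof (rule summable_comparison_test'[where N=0 and g="\<lambda>x. 2 * (norm (a x))^2 + 2 * (norm (b x))^2"])
  assume "summable (\<lambda>x. (norm (a x))^2)" "summable (\<lambda>x. (norm (b x))^2)"
  then show "summable (\<lambda>x. 2 * (norm (a x))^2 + 2 * (norm (b x))^2)"
    by (intro summable_add summable_mult)
qed (use sq_add_le in auto)

lemma in_l2_diff: "in_l2 a \<Longrightarrow> in_l2 b \<Longrightarrow> in_l2 (\<lambda>x. a x - b x)"
  unfolding in_l2_def
proof (rule summable_comparison_test'[where N=0 and g="\<lambda>x. 2 * (norm (a x))^2 + 2 * (norm (b x))^2"])
  assume "summable (\<lambda>x. (norm (a x))^2)" "summable (\<lambda>x. (norm (b x))^2)"
  then show "summable (\<lambda>x. 2 * (norm (a x))^2 + 2 * (norm (b x))^2)"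
    by (intro summable_add summable_mult)
qed (use sq_diff_le in auto)

lemma in_l2_cmult: "in_l2 a \<Longrightarrow> in_l2 (\<lambda>x. c * a x)"
  unfolding in_l2_def by (simp add: norm_mult power_mult_distrib summable_mult)

lemma l2_nonneg: "in_l2 a \<Longrightarrow> 0 \<le> l2_norm2 a"
  unfolding in_l2_def l2_norm2_def by (rule suminf_nonneg) auto

lemma l2_add_le: "in_l2 a \<Longrightarrow> in_l2 b \<Longrightarrow> l2_norm2 (\<lambda>x. a x + b x) \<le> 2 * l2_norm2 a + 2 * l2_norm2 b"
proof -
  assume a: "in_l2 a" and b: "in_l2 b"
  have "l2_norm2 (\<lambda>x. a x + b x) \<le> (\<Sum>x. 2 * (norm (a x))^2 + 2 * (norm (b x))^2)"
    unfolding l2_norm2_def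
    by (rule suminf_le) (use in_l2_add[OF a b] a b in \<open>auto simp: in_l2_def intro: sq_add_le summable_add summable_mult\<close>)
  also have "\<dots> = 2 * l2_norm2 a + 2 * l2_norm2 b"
    using a b unfolding in_l2_def l2_norm2_def
    by (simp add: suminf_add[symmetric] suminf_mult summable_mult)
  finally show ?thesis .
qed

lemma l2_diff_le: "in_l2 a \<Longrightarrow> in_l2 b \<Longrightarrow> l2_norm2 (\<lambda>x. a x - b x) \<le> 2 * l2_norm2 a + 2 * l2_norm2 b"
proof -
  assume a: "in_l2 a" and b: "in_l2 b"
  have b': "in_l2 (\<lambda>x. - b x)" using in_l2_cmult[OF b, of "-1"] by simp
  have "l2_norm2 (\<lambda>x. - b x) = l2_norm2 b" by (simp add: l2_norm2_def)
  then show ?thesis using l2_add_le[OF a b'] by simp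
qed

lemma l2_zero_tendsto:
  assumes "\<And>n. in_l2 (a n)" "\<And>n. in_l2 (b n)"
    and "(\<lambda>n. l2_norm2 (a n)) \<longlonglongrightarrow> 0" "(\<lambda>n. l2_norm2 (b n)) \<longlonglongrightarrow> 0"
  shows "(\<lambda>n. l2_norm2 (\<lambda>x. a n x - b n x)) \<longlonglongrightarrow> 0"
proof (rule real_tendsto_sandwich[where f="\<lambda>_. 0" and h="\<lambda>n. 2 * l2_norm2 (a n) + 2 * l2_norm2 (b n)"])
  show "\<forall>\<^sub>F n in sequentially. 0 \<le> l2_norm2 (\<lambda>x. a n x - b n x)"
    by (intro always_eventually allI l2_nonneg in_l2_diff assms)
  show "\<forall>\<^sub>F n in sequentially. l2_norm2 (\<lambda>x. a n x - b n x) \<le> 2 * l2_norm2 (a n) + 2 * l2_norm2 (b n)"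
    by (intro always_eventually allI l2_diff_le assms)
  show "(\<lambda>n. 2 * l2_norm2 (a n) + 2 * l2_norm2 (b n)) \<longlonglongrightarrow> 0"
    using tendsto_add[OF tendsto_mult_left[OF assms(3)] tendsto_mult_left[OF assms(4)], of 2 2] by simp
qed simp

definition ip :: "(nat \<Rightarrow> complex) \<Rightarrow> (nat \<Rightarrow> complex) \<Rightarrow> complex" where
  "ip a b = (\<Sum>x. cnj (a x) * b x)"

lemma ip_summable:
  assumes "in_l2 a" "in_l2 b"
  shows "summable (\<lambda>x. norm (cnj (a x) * b x))"
proof (rule summable_comparison_test'[where N=0])
  show "summable (\<lambda>x. (norm (a x))^2 + (norm (b x))^2)"
    using assms unfolding in_l2_def by (rule summable_add)
  fix x :: nat
  have "norm (a x) * norm (b x) \<le> (norm (a x))^2 + (norm (b x))^2"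
    using sum_squares_ge_zero[of "norm (a x) - norm (b x)" 0]
    by (simp add: power2_eq_square algebra_simps) (smt (verit) mult_nonneg_nonneg norm_ge_zero)
  then show "norm (norm (cnj (a x) * b x)) \<le> (norm (a x))^2 + (norm (b x))^2"
    by (simp add: norm_mult)
qed

lemma ip_CS:
  assumes "in_l2 a" "in_l2 b"
  shows "norm (ip a b) \<le> sqrt (l2_norm2 a * l2_norm2 b)"
proof -
  have s: "summable (\<lambda>x. norm (cnj (a x) * b x))" by (rule ip_summable[OF assms])
  have "norm (ip a b) \<le> (\<Sum>x. norm (cnj (a x) * b x))"
    unfolding ip_def by (rule summable_norm[OF s])
  also have "\<dots> \<le> sqrt (l2_norm2 a * l2_norm2 b)"
  proof (rule suminf_le_const[OF s])
    fix N
    have "(\<Sum>x<N. norm (cnj (a x) * b x))^2 = (\<Sum>x<N. norm (a x) * norm (b x))^2"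
      by (simp add: norm_mult)
    also have "\<dots> \<le> (\<Sum>x<N. (norm (a x))^2) * (\<Sum>x<N. (norm (b x))^2)"
      by (rule Cauchy_Schwarz_ineq_sum)
    also have "\<dots> \<le> l2_norm2 a * l2_norm2 b"
      using assms unfolding in_l2_def l2_norm2_def
      by (intro mult_mono sum_le_suminf) (auto intro: sum_nonneg suminf_nonneg)
    finally have "(\<Sum>x<N. norm (cnj (a x) * b x))^2 \<le> l2_norm2 a * l2_norm2 b" .
    then have "sqrt ((\<Sum>x<N. norm (cnj (a x) * b x))^2) \<le> sqrt (l2_norm2 a * l2_norm2 b)"
      by (rule real_sqrt_le_mono)
    moreover have "0 \<le> (\<Sum>x<N. norm (cnj (a x) * b x))" by (intro sum_nonneg) auto
    ultimately show "(\<Sum>x<N. norm (cnj (a x) * b x)) \<le> sqrt (l2_norm2 a * l2_norm2 b)" by simp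
  qed
  finally show ?thesis .
qed

lemma ip_summable': "in_l2 a \<Longrightarrow> in_l2 b \<Longrightarrow> summable (\<lambda>x. cnj (a x) * b x)"
  by (rule summable_norm_cancel[OF ip_summable])

lemma ip_conv:
  assumes a: "\<And>n. in_l2 (a n)" "in_l2 A" and b: "\<And>n. in_l2 (b n)" "in_l2 B"
    and la: "(\<lambda>n. l2_norm2 (\<lambda>x. a n x - A x)) \<longlonglongrightarrow> 0"
    and lb: "(\<lambda>n. l2_norm2 (\<lambda>x. b n x - B x)) \<longlonglongrightarrow> 0"
  shows "(\<lambda>n. ip (a n) (b n)) \<longlonglongrightarrow> ip A B"
proof -
  define da where "da n = (\<lambda>x. a n x - A x)" for n
  define db where "db n = (\<lambda>x. b n x - B x)" for n
  have ida: "in_l2 (da n)" for n unfolding da_def by (intro in_l2_diff a)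
  have idb: "in_l2 (db n)" for n unfolding db_def by (intro in_l2_diff b)
  have eq: "ip (a n) (b n) - ip A B = ip (da n) (db n) + ip A (db n) + ip (da n) B" for n
  proof -
    have "ip (a n) (b n) - ip A B = (\<Sum>x. cnj (a n x) * b n x - cnj (A x) * B x)"
      unfolding ip_def by (intro suminf_diff ip_summable' a b)
    also have "\<dots> = (\<Sum>x. cnj (da n x) * db n x + cnj (A x) * db n x + cnj (da n x) * B x)"
      by (simp add: da_def db_def algebra_simps)
    also have "\<dots> = ip (da n) (db n) + ip A (db n) + ip (da n) B"
      unfolding ip_def
      by (subst suminf_add[symmetric], (intro summable_add ip_summable' ida idb a b)+)+ simp
    finally show ?thesis .
  qed
  have t1: "(\<lambda>n. sqrt (l2_norm2 (da n) * l2_norm2 (db n))) \<longlonglongrightarrow> 0"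
    using tendsto_real_sqrt[OF tendsto_mult[OF la lb]] by (simp add: da_def db_def)
  have t2: "(\<lambda>n. sqrt (l2_norm2 A * l2_norm2 (db n))) \<longlonglongrightarrow> 0"
    using tendsto_real_sqrt[OF tendsto_mult[OF tendsto_const lb, of "l2_norm2 A"]] by (simp add: db_def)
  have t3: "(\<lambda>n. sqrt (l2_norm2 (da n) * l2_norm2 B)) \<longlonglongrightarrow> 0"
    using tendsto_real_sqrt[OF tendsto_mult[OF la tendsto_const, of "l2_norm2 B"]] by (simp add: da_def)
  have "(\<lambda>n. ip (a n) (b n) - ip A B) \<longlonglongrightarrow> 0"
  proof (rule Lim_null_comparison)
    show "\<forall>\<^sub>F n in sequentially. norm (ip (a n) (b n) - ip A B) \<le>
      sqrt (l2_norm2 (da n) * l2_norm2 (db n)) + sqrt (l2_norm2 A * l2_norm2 (db n)) + sqrt (l2_norm2 (da n) * l2_norm2 B)"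
    proof (intro always_eventually allI)
      fix n
      have "norm (ip (a n) (b n) - ip A B) \<le> norm (ip (da n) (db n)) + norm (ip A (db n)) + norm (ip (da n) B)"
        unfolding eq by (rule order_trans[OF norm_triangle_ineq add_right_mono[OF norm_triangle_ineq]])
      also have "\<dots> \<le> sqrt (l2_norm2 (da n) * l2_norm2 (db n)) + sqrt (l2_norm2 A * l2_norm2 (db n)) + sqrt (l2_norm2 (da n) * l2_norm2 B)"
        by (intro add_mono ip_CS ida idb a b)
      finally show "norm (ip (a n) (b n) - ip A B) \<le> sqrt (l2_norm2 (da n) * l2_norm2 (db n)) + sqrt (l2_norm2 A * l2_norm2 (db n)) + sqrt (l2_norm2 (da n) * l2_norm2 B)" .
    qed
    show "(\<lambda>n. sqrt (l2_norm2 (da n) * l2_norm2 (db n)) + sqrt (l2_norm2 A * l2_norm2 (db n)) + sqrt (l2_norm2 (da n) * l2_norm2 B)) \<longlonglongrightarrow> 0"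
      using tendsto_add[OF tendsto_add[OF t1 t2] t3] by simp
  qed
  then show ?thesis by (simp add: LIM_zero_iff)
qed

lemma tail_eq:
  fixes H :: "nat \<Rightarrow> real"
  assumes "summable H"
  shows "summable (\<lambda>x. if n \<le> x then H x else 0)" "(\<Sum>x. if n \<le> x then H x else 0) = suminf H - (\<Sum>x<n. H x)"
proof -
  have f: "summable (\<lambda>x. if x < n then H x else 0)" by (rule summable_finite[of "{..<n}"]) auto
  have f2: "(\<Sum>x. if x < n then H x else 0) = (\<Sum>x<n. H x)"
    by (subst suminf_finite[of "{..<n}"]) auto
  have e: "(\<lambda>x. if n \<le> x then H x else 0) = (\<lambda>x. H x - (if x < n then H x else 0))" by auto
  show "summable (\<lambda>x. if n \<le> x then H x else 0)" unfolding e by (intro summable_diff assms f)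
  show "(\<Sum>x. if n \<le> x then H x else 0) = suminf H - (\<Sum>x<n. H x)"
    unfolding e by (subst suminf_diff[OF assms f, symmetric]) (simp add: f2)
qed

lemma tail_tendsto:
  fixes H :: "nat \<Rightarrow> real"
  assumes "summable H"
  shows "(\<lambda>n. \<Sum>x. if n \<le> x then H x else 0) \<longlonglongrightarrow> 0"
  unfolding tail_eq(2)[OF assms]
  using tendsto_diff[OF tendsto_const summable_LIMSEQ[OF assms], of "suminf H"] by simp



lemma dom_l2: "u \<in> L0_dom \<Longrightarrow> in_l2 u"
  by (simp add: L0_dom_def)

lemma dom_w: "u \<in> L0_dom \<Longrightarrow> summable (\<lambda>x. (real x)^2 * (norm (u x))^2)"
  by (simp add: L0_dom_def)

lemma L0_l2:
  assumes u: "u \<in> L0_dom"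
  shows "in_l2 (L0 u)"
proof -
  define U where "U x = (norm (u x))^2" for x
  define A where "A x = (real x)^2 * U x" for x
  have sU: "summable U" using dom_l2[OF u] by (simp add: in_l2_def U_def[abs_def])
  have sA: "summable A" using dom_w[OF u] by (simp add: A_def[abs_def] U_def)
  have sP1: "summable (\<lambda>x. A (Suc x))" using sA by (simp add: summable_Suc_iff)
  define T where "T y = 2 * A y + 2 * U y" for y
  have sT: "summable T" unfolding T_def by (intro summable_add summable_mult sA sU)
  define T' where "T' x = (if x = 0 then 0 else T (x - 1))" for x
  have sT': "summable T'"
  proof -
    have "summable (\<lambda>x. T' (Suc x))" using sT by (simp add: T'_def)
    then show ?thesis by (simp add: summable_Suc_iff)
  qed
  have sB: "summable (\<lambda>x. 3 * (A (Suc x) + (8 * A x + 2 * U x) + T' x))"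
    by (intro summable_mult summable_add sP1 sA sU sT' )
  show ?thesis unfolding in_l2_def
  proof (rule summable_comparison_test'[where N=0, OF sB])
    fix x :: nat
    have Un: "U y \<ge> 0" for y by (simp add: U_def)
    have P2: "(real (2*x+1))^2 * U x \<le> 8 * A x + 2 * U x"
    proof -
      have "(real (2*x+1))^2 \<le> 8 * (real x)^2 + 2"
        using sum_squares_ge_zero[of "2 * real x - 1" 0] by (simp add: power2_eq_square algebra_simps)
      then have "(real (2*x+1))^2 * U x \<le> (8 * (real x)^2 + 2) * U x" by (rule mult_right_mono) (simp add: Un)
      then show ?thesis by (simp add: A_def algebra_simps)
    qed
    have P3: "(real x)^2 * U (x - 1) \<le> T' x"
    proof (cases x)
      case 0 then show ?thesis by (simp add: T'_def)
    next
      case (Suc y)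
      have "(real (Suc y))^2 \<le> 2 * (real y)^2 + 2"
        using sum_squares_ge_zero[of "real y - 1" 0] by (simp add: power2_eq_square algebra_simps)
      then have "(real (Suc y))^2 * U y \<le> (2 * (real y)^2 + 2) * U y" by (rule mult_right_mono) (simp add: Un)
      then show ?thesis using Suc by (simp add: T'_def T_def A_def algebra_simps)
    qed
    have nb: "norm (L0 u x) \<le> real (x+1) * norm (u (x+1)) + real (2*x+1) * norm (u x) + real x * norm (u (x-1))"
    proof (cases "x = 0")
      case True
      then show ?thesis using norm_triangle_ineq[of "- u 1" "u 0"] by (simp add: L0_def)
    next
      case False
      have "norm (L0 u x) = norm (- (of_nat (x+1) * u (x+1)) + of_nat (2*x+1) * u x - of_nat x * u (x-1))"
        using False by (simp add: L0_def algebra_simps)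
      also have "\<dots> \<le> norm (- (of_nat (x+1) * u (x+1)) + of_nat (2*x+1) * u x) + norm (of_nat x * u (x-1))"
        by (rule norm_triangle_ineq4)
      also have "\<dots> \<le> norm (of_nat (x+1) * u (x+1)) + norm (of_nat (2*x+1) * u x) + norm (of_nat x * u (x-1) :: complex)"
        using norm_triangle_ineq[of "- (of_nat (x+1) * u (x+1))" "of_nat (2*x+1) * u x"] by simp
      also have "\<dots> = real (x+1) * norm (u (x+1)) + real (2*x+1) * norm (u x) + real x * norm (u (x-1))"
        by (simp add: norm_mult del: of_nat_Suc of_nat_add)
      finally show ?thesis .
    qed
    have "(norm (L0 u x))^2 \<le> (real (x+1) * norm (u (x+1)) + real (2*x+1) * norm (u x) + real x * norm (u (x-1)))^2"
      using nb by (intro power_mono) auto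
    also have "\<dots> \<le> 3 * ((real (x+1) * norm (u (x+1)))^2 + (real (2*x+1) * norm (u x))^2 + (real x * norm (u (x-1)))^2)"
      by (rule sq_add3_le)
    also have "\<dots> = 3 * (A (Suc x) + (real (2*x+1))^2 * U x + (real x)^2 * U (x - 1))"
      by (simp add: A_def U_def power_mult_distrib del: of_nat_Suc of_nat_add)
    also have "\<dots> \<le> 3 * (A (Suc x) + (8 * A x + 2 * U x) + T' x)"
      using P2 P3 by simp
    finally show "norm ((norm (L0 u x))^2) \<le> 3 * (A (Suc x) + (8 * A x + 2 * U x) + T' x)" by simp
  qed
qed

lemma dom_diff:
  assumes "u \<in> L0_dom" "v \<in> L0_dom"
  shows "(\<lambda>x. u x - v x) \<in> L0_dom"
proof -
  have "summable (\<lambda>x. (real x)^2 * (norm (u x - v x))^2)"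
  proof (rule summable_comparison_test'[where N=0])
    show "summable (\<lambda>x. 2 * ((real x)^2 * (norm (u x))^2) + 2 * ((real x)^2 * (norm (v x))^2))"
      by (intro summable_add summable_mult dom_w assms)
    fix x :: nat
    have "(real x)^2 * (norm (u x - v x))^2 \<le> (real x)^2 * (2 * (norm (u x))^2 + 2 * (norm (v x))^2)"
      by (intro mult_left_mono sq_diff_le) auto
    then show "norm ((real x)^2 * (norm (u x - v x))^2) \<le> 2 * ((real x)^2 * (norm (u x))^2) + 2 * ((real x)^2 * (norm (v x))^2)"
      by (simp add: algebra_simps)
  qed
  then show ?thesis using in_l2_diff[OF dom_l2[OF assms(1)] dom_l2[OF assms(2)]]
    by (simp add: L0_dom_def)
qed

lemma L0_diff: "L0 (\<lambda>x. u x - v x) x = L0 u x - L0 v x"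
  by (simp add: L0_def algebra_simps)

lemma sbp:
  "(\<Sum>x<Suc N. cnj (u x) * L0 u x) = complex_of_real (\<Sum>y<N. real (y+1) * (norm (u y - u (y+1)))^2)
      + of_nat (N+1) * cnj (u N) * (u N - u (N+1))"
proof (induction N)
  case 0
  then show ?case by (simp add: L0_def algebra_simps)
next
  case (Suc N)
  have nsq: "complex_of_real ((norm (u N - u (Suc N)))^2) = (u N - u (Suc N)) * (cnj (u N) - cnj (u (Suc N)))"
    using complex_norm_square[of "u N - u (Suc N)"] by simp
  have "(\<Sum>x<Suc (Suc N). cnj (u x) * L0 u x) = (\<Sum>x<Suc N. cnj (u x) * L0 u x) + cnj (u (Suc N)) * L0 u (Suc N)"
    by simp
  also have "\<dots> = complex_of_real (\<Sum>y<N. real (y+1) * (norm (u y - u (y+1)))^2)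
      + of_nat (N+1) * cnj (u N) * (u N - u (N+1)) + cnj (u (Suc N)) * L0 u (Suc N)"
    using Suc by simp
  also have "\<dots> = complex_of_real (\<Sum>y<N. real (y+1) * (norm (u y - u (y+1)))^2)
      + of_nat (N+1) * complex_of_real ((norm (u N - u (Suc N)))^2) + of_nat (Suc N + 1) * cnj (u (Suc N)) * (u (Suc N) - u (Suc N + 1))"
    unfolding nsq by (simp add: L0_def algebra_simps)
  also have "\<dots> = complex_of_real (\<Sum>y<Suc N. real (y+1) * (norm (u y - u (y+1)))^2)
      + of_nat (Suc N + 1) * cnj (u (Suc N)) * (u (Suc N) - u (Suc N + 1))"
    by simp
  finally show ?case .
qed

lemma pos_form:
  assumes u: "u \<in> L0_dom"
  shows "Im (ip u (L0 u)) = 0 \<and> 0 \<le> Re (ip u (L0 u))"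
proof -
  define Q where "Q N = (\<Sum>y<N. real (y+1) * (norm (u y - u (y+1)))^2)" for N
  define B where "B N = of_nat (N+1) * cnj (u N) * (u N - u (N+1))" for N
  have s: "(\<lambda>N. \<Sum>x<N. cnj (u x) * L0 u x) \<longlonglongrightarrow> ip u (L0 u)"
    unfolding ip_def by (intro summable_LIMSEQ ip_summable' dom_l2 L0_l2 u)
  then have s1: "(\<lambda>N. \<Sum>x<Suc N. cnj (u x) * L0 u x) \<longlonglongrightarrow> ip u (L0 u)"
    by (rule LIMSEQ_Suc)
  have nu: "(\<lambda>N. norm (u N)) \<longlonglongrightarrow> 0"
  proof -
    have "(\<lambda>N. (norm (u N))^2) \<longlonglongrightarrow> 0"
      using summable_LIMSEQ_zero[OF dom_l2[OF u, unfolded in_l2_def]] .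
    from tendsto_real_sqrt[OF this] show ?thesis by simp
  qed
  have xu: "(\<lambda>N. real N * norm (u N)) \<longlonglongrightarrow> 0"
  proof -
    have "(\<lambda>N. (real N)^2 * (norm (u N))^2) \<longlonglongrightarrow> 0"
      using summable_LIMSEQ_zero[OF dom_w[OF u]] .
    then have "(\<lambda>N. (real N * norm (u N))^2) \<longlonglongrightarrow> 0" by (simp add: power_mult_distrib)
    from tendsto_real_sqrt[OF this] show ?thesis by simp
  qed
  have B0: "B \<longlonglongrightarrow> 0"
  proof (rule Lim_null_comparison)
    show "\<forall>\<^sub>F N in sequentially. norm (B N) \<le> (real N * norm (u N) + norm (u N)) * (norm (u N) + norm (u (Suc N)))"
    proof (intro always_eventually allI)
      fix N
      have nN: "norm (of_nat (N+1) :: complex) = real N + 1"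
        by (simp only: norm_of_nat)
      have "norm (B N) = (real N + 1) * norm (u N) * norm (u N - u (N+1))"
        unfolding B_def norm_mult nN by simp
      also have "\<dots> \<le> (real N + 1) * norm (u N) * (norm (u N) + norm (u (Suc N)))"
        using norm_triangle_ineq4[of "u N" "u (Suc N)"] by (intro mult_left_mono) auto
      finally show "norm (B N) \<le> (real N * norm (u N) + norm (u N)) * (norm (u N) + norm (u (Suc N)))"
        by (simp add: algebra_simps)
    qed
    show "(\<lambda>N. (real N * norm (u N) + norm (u N)) * (norm (u N) + norm (u (Suc N)))) \<longlonglongrightarrow> 0"
      using tendsto_mult[OF tendsto_add[OF xu nu] tendsto_add[OF nu LIMSEQ_Suc[OF nu]]] by simp
  qed
  have "(\<lambda>N. (\<Sum>x<Suc N. cnj (u x) * L0 u x) - B N) \<longlonglongrightarrow> ip u (L0 u) - 0"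
    by (intro tendsto_diff s1 B0)
  moreover have "(\<lambda>N. (\<Sum>x<Suc N. cnj (u x) * L0 u x) - B N) = (\<lambda>N. complex_of_real (Q N))"
    unfolding Q_def B_def sbp by simp
  ultimately have q: "(\<lambda>N. complex_of_real (Q N)) \<longlonglongrightarrow> ip u (L0 u)"
    by simp
  have "(\<lambda>N. Im (complex_of_real (Q N))) \<longlonglongrightarrow> Im (ip u (L0 u))" by (rule tendsto_Im[OF q])
  then have im: "Im (ip u (L0 u)) = 0" using LIMSEQ_unique[OF _ tendsto_const] by simp
  have "(\<lambda>N. Re (complex_of_real (Q N))) \<longlonglongrightarrow> Re (ip u (L0 u))" by (rule tendsto_Re[OF q])
  then have "(\<lambda>N. Q N) \<longlonglongrightarrow> Re (ip u (L0 u))" by simp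
  moreover have "Q N \<ge> 0" for N unfolding Q_def by (intro sum_nonneg) auto
  ultimately have "0 \<le> Re (ip u (L0 u))" by (intro LIMSEQ_le_const) auto
  with im show ?thesis by simp
qed



lemma ip_self_scale:
  assumes "in_l2 D"
  shows "ip D (\<lambda>x. z * D x) = z * complex_of_real (l2_norm2 D)"
proof -
  have s: "summable (\<lambda>x. (norm (D x))^2)" using assms by (simp add: in_l2_def)
  have "ip D (\<lambda>x. z * D x) = (\<Sum>x. z * complex_of_real ((norm (D x))^2))"
    unfolding ip_def by (rule suminf_cong) (simp only: complex_norm_square, simp add: mult_ac)
  also have "\<dots> = z * (\<Sum>x. complex_of_real ((norm (D x))^2))"
    by (rule suminf_mult) (rule summable_of_real[OF s])
  also have "(\<Sum>x. complex_of_real ((norm (D x))^2)) = complex_of_real (l2_norm2 D)"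
    unfolding l2_norm2_def by (rule suminf_of_real[OF s, symmetric])
  finally show ?thesis .
qed

lemma graph_unique:
  assumes z: "z \<notin> complex_of_real ` {0..}"
    and gv: "L0_closure_graph v (\<lambda>x. chi0 x + z * v x)"
    and gw: "L0_closure_graph w (\<lambda>x. chi0 x + z * w x)"
  shows "v = w"
proof -
  obtain u where v2: "in_l2 v" and wv2: "in_l2 (\<lambda>x. chi0 x + z * v x)" and ud: "\<And>n. u n \<in> L0_dom"
    and u1: "(\<lambda>n. l2_norm2 (\<lambda>x. u n x - v x)) \<longlonglongrightarrow> 0"
    and u2: "(\<lambda>n. l2_norm2 (\<lambda>x. L0 (u n) x - (chi0 x + z * v x))) \<longlonglongrightarrow> 0"
    using gv unfolding L0_closure_graph_def by blast
  obtain u' where w2: "in_l2 w" and ww2: "in_l2 (\<lambda>x. chi0 x + z * w x)" and ud': "\<And>n. u' n \<in> L0_dom"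
    and u1': "(\<lambda>n. l2_norm2 (\<lambda>x. u' n x - w x)) \<longlonglongrightarrow> 0"
    and u2': "(\<lambda>n. l2_norm2 (\<lambda>x. L0 (u' n) x - (chi0 x + z * w x))) \<longlonglongrightarrow> 0"
    using gw unfolding L0_closure_graph_def by blast
  define d where "d n = (\<lambda>x. u n x - u' n x)" for n
  define D where "D = (\<lambda>x. v x - w x)"
  have dd: "d n \<in> L0_dom" for n unfolding d_def by (intro dom_diff ud ud')
  have D2: "in_l2 D" unfolding D_def by (intro in_l2_diff v2 w2)
  have zD2: "in_l2 (\<lambda>x. z * D x)" by (rule in_l2_cmult[OF D2])
  have la: "(\<lambda>n. l2_norm2 (\<lambda>x. d n x - D x)) \<longlonglongrightarrow> 0"
  proof -
    have "(\<lambda>n. l2_norm2 (\<lambda>x. (u n x - v x) - (u' n x - w x))) \<longlonglongrightarrow> 0"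
      by (rule l2_zero_tendsto[OF _ _ u1 u1']) (intro in_l2_diff dom_l2 ud ud' v2 w2)+
    moreover have "(\<lambda>x. (u n x - v x) - (u' n x - w x)) = (\<lambda>x. d n x - D x)" for n
      by (auto simp: d_def D_def algebra_simps)
    ultimately show ?thesis by simp
  qed
  have lb: "(\<lambda>n. l2_norm2 (\<lambda>x. L0 (d n) x - z * D x)) \<longlonglongrightarrow> 0"
  proof -
    have "(\<lambda>n. l2_norm2 (\<lambda>x. (L0 (u n) x - (chi0 x + z * v x)) - (L0 (u' n) x - (chi0 x + z * w x)))) \<longlonglongrightarrow> 0"
      by (rule l2_zero_tendsto[OF _ _ u2 u2']) (intro in_l2_diff L0_l2 ud ud' wv2 ww2)+
    moreover have "(\<lambda>x. (L0 (u n) x - (chi0 x + z * v x)) - (L0 (u' n) x - (chi0 x + z * w x))) = (\<lambda>x. L0 (d n) x - z * D x)" for n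
      by (auto simp: d_def D_def L0_diff algebra_simps)
    ultimately show ?thesis by simp
  qed
  have conv: "(\<lambda>n. ip (d n) (L0 (d n))) \<longlonglongrightarrow> ip D (\<lambda>x. z * D x)"
    by (rule ip_conv[OF _ D2 _ zD2 la lb]) (intro dom_l2 L0_l2 dd)+
  have lim: "(\<lambda>n. ip (d n) (L0 (d n))) \<longlonglongrightarrow> z * complex_of_real (l2_norm2 D)"
    using conv unfolding ip_self_scale[OF D2] .
  define L where "L = l2_norm2 D"
  have L0': "L \<ge> 0" unfolding L_def by (rule l2_nonneg[OF D2])
  have "(\<lambda>n. Im (ip (d n) (L0 (d n)))) \<longlonglongrightarrow> Im (z * complex_of_real L)"
    using tendsto_Im[OF lim] by (simp add: L_def)
  moreover have "Im (ip (d n) (L0 (d n))) = 0" for n using pos_form[OF dd] by simp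
  ultimately have imz: "Im z * L = 0" using LIMSEQ_unique[OF _ tendsto_const] by fastforce
  have "(\<lambda>n. Re (ip (d n) (L0 (d n)))) \<longlonglongrightarrow> Re (z * complex_of_real L)"
    using tendsto_Re[OF lim] by (simp add: L_def)
  moreover have "Re (ip (d n) (L0 (d n))) \<ge> 0" for n using pos_form[OF dd] by simp
  ultimately have rez: "0 \<le> Re z * L" by (intro LIMSEQ_le_const) auto
  have "L = 0"
  proof (rule ccontr)
    assume "L \<noteq> 0"
    then have Lp: "L > 0" using L0' by simp
    then have "Im z = 0" using imz by simp
    moreover have "Re z \<ge> 0" using rez Lp by (simp add: zero_le_mult_iff)
    ultimately have "z \<in> complex_of_real ` {0..}"
      by (intro image_eqI[of _ _ "Re z"]) (auto simp: complex_eq_iff)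
    then show False using z by blast
  qed
  then have "\<forall>x. (norm (D x))^2 = 0"
    using suminf_eq_zero_iff[of "\<lambda>x. (norm (D x))^2"] D2 unfolding L_def l2_norm2_def in_l2_def by simp
  then show "v = w" by (auto simp: D_def)
qed



definition phi :: "real \<Rightarrow> real" where
  "phi s = max 0 (min 1 (2 - s))"

lemma phi_range: "0 \<le> phi s" "phi s \<le> 1"
  by (auto simp: phi_def)

lemma phi_one: "s \<le> 1 \<Longrightarrow> phi s = 1"
  by (auto simp: phi_def)

lemma phi_zero: "2 \<le> s \<Longrightarrow> phi s = 0"
  by (auto simp: phi_def)

lemma phi_lip: "\<bar>phi a - phi b\<bar> \<le> \<bar>a - b\<bar>"
  by (auto simp: phi_def max_def min_def abs_if)

definition cutc :: "nat \<Rightarrow> nat \<Rightarrow> real" where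
  "cutc m x = phi (real x / real m)"

lemma cut_lt: "x \<le> m \<Longrightarrow> 0 < m \<Longrightarrow> cutc m x = 1"
  unfolding cutc_def by (rule phi_one) (simp add: divide_le_eq)

lemma cut_big: "2 * m \<le> x \<Longrightarrow> 0 < m \<Longrightarrow> cutc m x = 0"
  unfolding cutc_def by (rule phi_zero) (simp add: le_divide_eq)

lemma cut_diff: "0 < m \<Longrightarrow> \<bar>cutc m (Suc x) - cutc m x\<bar> \<le> 1 / real m"
proof -
  assume m: "0 < m"
  have "\<bar>cutc m (Suc x) - cutc m x\<bar> \<le> \<bar>real (Suc x) / real m - real x / real m\<bar>"
    unfolding cutc_def by (rule phi_lip)
  also have "\<dots> = 1 / real m" using m by (simp add: diff_divide_distrib[symmetric])
  finally show ?thesis .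
qed

lemma cut_b1:
  assumes m: "0 < m"
  shows "real (x+1) * \<bar>cutc m (x+1) - cutc m x\<bar> \<le> 2"
proof (cases "2 * m \<le> x")
  case True
  then show ?thesis using cut_big[OF _ m, of x] cut_big[OF _ m, of "x+1"] by simp
next
  case False
  then have "real (x+1) \<le> 2 * real m" by linarith
  have "real (x+1) * \<bar>cutc m (x+1) - cutc m x\<bar> \<le> real (x+1) * (1 / real m)"
    using cut_diff[OF m, of x] by (intro mult_left_mono) auto
  also have "\<dots> \<le> 2" using \<open>real (x+1) \<le> 2 * real m\<close> m by (simp add: divide_le_eq)
  finally show ?thesis .
qed

lemma cut_b2:
  assumes m: "0 < m"
  shows "real x * \<bar>cutc m (x-1) - cutc m x\<bar> \<le> 2"
proof (cases x)
  case 0 then show ?thesis by simp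
next
  case (Suc y)
  show ?thesis
  proof (cases "2 * m \<le> y")
    case True
    then show ?thesis using Suc cut_big[OF _ m, of y] cut_big[OF _ m, of "Suc y"] by simp
  next
    case False
    then have "real (Suc y) \<le> 2 * real m" by linarith
    have "real (Suc y) * \<bar>cutc m y - cutc m (Suc y)\<bar> \<le> real (Suc y) * (1 / real m)"
      using cut_diff[OF m, of y] by (intro mult_left_mono) (auto simp: abs_minus_commute)
    also have "\<dots> \<le> 2" using \<open>real (Suc y) \<le> 2 * real m\<close> m by (simp add: divide_le_eq)
    finally show ?thesis using Suc by simp
  qed
qed

lemma cut_range: "0 \<le> cutc m x" "cutc m x \<le> 1"
  unfolding cutc_def by (rule phi_range)+

lemma L0_cut:
  "L0 (\<lambda>y. complex_of_real (c y) * v y) x - complex_of_real (c x) * L0 v x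
     = - of_nat (x+1) * complex_of_real (c (x+1) - c x) * v (x+1) - of_nat x * complex_of_real (c (x-1) - c x) * v (x-1)"
  by (cases x) (simp_all add: L0_def algebra_simps)

lemma pb1:
  assumes m: "0 < m"
  shows "(norm (complex_of_real (cutc m x) * v x - v x))^2 \<le> (if m \<le> x then (norm (v x))^2 else 0)"
proof (cases "m \<le> x")
  case True
  have "complex_of_real (cutc m x) * v x - v x = complex_of_real (cutc m x - 1) * v x"
    by (simp add: algebra_simps)
  then have "norm (complex_of_real (cutc m x) * v x - v x) = \<bar>cutc m x - 1\<bar> * norm (v x)"
    by (simp only: norm_mult norm_of_real)
  also have "\<dots> \<le> 1 * norm (v x)"
    using cut_range[of m x] by (intro mult_right_mono) auto
  finally show ?thesis using True by (simp add: power_mono)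
next
  case False
  then show ?thesis using cut_lt[OF _ m, of x] by simp
qed

lemma lin_helper: "(a::real) \<le> 2*a1 + 2*(2*b1+2*c1) \<Longrightarrow> a1 \<le> l1 \<Longrightarrow> b1 \<le> 4*p1 \<Longrightarrow> c1 \<le> 4*q1 \<Longrightarrow> a \<le> 2*l1 + 16*p1 + 16*q1"
  by simp

lemma pb2:
  fixes v :: "nat \<Rightarrow> complex" and m x :: nat
  assumes m: "0 < m"
  defines "u \<equiv> (\<lambda>y. complex_of_real (cutc m y) * v y)"
  shows "(norm (L0 u x - L0 v x))^2 \<le>
     (if m \<le> x then 2 * (norm (L0 v x))^2 + 16 * (norm (v (x+1)))^2 + 16 * (norm (v (x-1)))^2 else 0)"
proof -
  define t1 where "t1 = of_nat (x+1) * complex_of_real (cutc m (x+1) - cutc m x) * v (x+1)"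
  define t2 where "t2 = of_nat x * complex_of_real (cutc m (x-1) - cutc m x) * v (x-1)"
  have eq: "L0 u x - L0 v x = complex_of_real (cutc m x - 1) * L0 v x + (- t1 - t2)"
    using L0_cut[of "cutc m" v x] unfolding u_def t1_def t2_def by (simp add: algebra_simps)
  show ?thesis
  proof (cases "m \<le> x")
    case False
    then have "cutc m x = 1" "cutc m (x+1) = 1" "cutc m (x-1) = 1"
      using cut_lt[OF _ m] by auto
    then show ?thesis using False unfolding eq t1_def t2_def by simp
  next
    case True
    have a: "(norm (complex_of_real (cutc m x - 1) * L0 v x))^2 \<le> (norm (L0 v x))^2"
    proof -
      have "norm (complex_of_real (cutc m x - 1) * L0 v x) \<le> 1 * norm (L0 v x)"
        unfolding norm_mult norm_of_real using cut_range[of m x] by (intro mult_right_mono) auto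
      then show ?thesis by (intro power_mono) auto
    qed
    have b1: "(norm t1)^2 \<le> 4 * (norm (v (x+1)))^2"
    proof -
      have "norm t1 = (real (x+1) * \<bar>cutc m (x+1) - cutc m x\<bar>) * norm (v (x+1))"
        unfolding t1_def norm_mult norm_of_real by (simp only: norm_of_nat)
      also have "\<dots> \<le> 2 * norm (v (x+1))" by (intro mult_right_mono cut_b1 m) auto
      finally have "(norm t1)^2 \<le> (2 * norm (v (x+1)))^2" by (intro power_mono) auto
      then show ?thesis by (simp add: power_mult_distrib)
    qed
    have b2: "(norm t2)^2 \<le> 4 * (norm (v (x-1)))^2"
    proof -
      have "norm t2 = (real x * \<bar>cutc m (x-1) - cutc m x\<bar>) * norm (v (x-1))"
        unfolding t2_def norm_mult norm_of_real by (simp only: norm_of_nat)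
      also have "\<dots> \<le> 2 * norm (v (x-1))" by (intro mult_right_mono cut_b2 m) auto
      finally have "(norm t2)^2 \<le> (2 * norm (v (x-1)))^2" by (intro power_mono) auto
      then show ?thesis by (simp add: power_mult_distrib)
    qed
    have "(norm (L0 u x - L0 v x))^2 \<le> 2 * (norm (complex_of_real (cutc m x - 1) * L0 v x))^2 + 2 * (norm (- t1 - t2))^2"
      unfolding eq by (rule sq_add_le)
    also have "(norm (- t1 - t2))^2 \<le> 2 * (norm t1)^2 + 2 * (norm t2)^2"
      using sq_diff_le[of "- t1" t2] by simp
    finally have X: "(norm (L0 u x - L0 v x))^2 \<le> 2 * (norm (complex_of_real (cutc m x - 1) * L0 v x))^2 + 2 * (2 * (norm t1)^2 + 2 * (norm t2)^2)"
      by simp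
    have "(norm (L0 u x - L0 v x))^2 \<le> 2 * (norm (L0 v x))^2 + 16 * (norm (v (x+1)))^2 + 16 * (norm (v (x-1)))^2"
      by (rule lin_helper[OF X a b1 b2])
    with True show ?thesis by simp
  qed
qed

lemma cutoff_graph:
  assumes v: "in_l2 v" and Lv: "in_l2 (L0 v)"
  shows "L0_closure_graph v (L0 v)"
proof -
  define u where "u n = (\<lambda>y. complex_of_real (cutc (Suc n) y) * v y)" for n
  have fs: "u n x = 0" if "2 * Suc n < x" for n x
    using cut_big[of "Suc n" x] that by (simp add: u_def)
  have ud: "u n \<in> L0_dom" for n
  proof -
    have z: "u n x = 0" if "x \<notin> {..2 * Suc n}" for x
      using that by (intro fs) (simp add: not_le)
    have "summable (\<lambda>x. (norm (u n x))^2)"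
      by (rule summable_finite[of "{..2 * Suc n}"]) (simp_all add: z)
    moreover have "summable (\<lambda>x. (real x)^2 * (norm (u n x))^2)"
      by (rule summable_finite[of "{..2 * Suc n}"]) (simp_all add: z)
    ultimately show ?thesis unfolding L0_dom_def in_l2_def by simp
  qed
  define H1 where "H1 x = (norm (v x))^2" for x
  define H2 where "H2 x = 2 * (norm (L0 v x))^2 + 16 * (norm (v (x+1)))^2 + 16 * (norm (v (x-1)))^2" for x
  have sH1: "summable H1" using v by (simp add: in_l2_def H1_def[abs_def])
  have sH2: "summable H2"
  proof -
    have s1: "summable (\<lambda>x. (norm (L0 v x))^2)" using Lv by (simp add: in_l2_def)
    have s2: "summable (\<lambda>x. (norm (v (x+1)))^2)"
      using v summable_Suc_iff[of "\<lambda>x. (norm (v x))^2"] by (simp add: in_l2_def)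
    have s3: "summable (\<lambda>x. (norm (v (x-1)))^2)"
      using v summable_Suc_iff[of "\<lambda>x. (norm (v (x-1)))^2"] by (simp add: in_l2_def)
    show ?thesis unfolding H2_def by (intro summable_add summable_mult s1 s2 s3)
  qed
  have T1: "(\<lambda>n. \<Sum>x. if Suc n \<le> x then H1 x else 0) \<longlonglongrightarrow> 0"
    using LIMSEQ_Suc[OF tail_tendsto[OF sH1]] .
  have T2: "(\<lambda>n. \<Sum>x. if Suc n \<le> x then H2 x else 0) \<longlonglongrightarrow> 0"
    using LIMSEQ_Suc[OF tail_tendsto[OF sH2]] .
  have c1: "(\<lambda>n. l2_norm2 (\<lambda>x. u n x - v x)) \<longlonglongrightarrow> 0"
  proof (rule real_tendsto_sandwich[OF _ _ tendsto_const T1])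
    show "\<forall>\<^sub>F n in sequentially. 0 \<le> l2_norm2 (\<lambda>x. u n x - v x)"
      by (intro always_eventually allI l2_nonneg in_l2_diff dom_l2 ud v)
    show "\<forall>\<^sub>F n in sequentially. l2_norm2 (\<lambda>x. u n x - v x) \<le> (\<Sum>x. if Suc n \<le> x then H1 x else 0)"
    proof (intro always_eventually allI)
      fix n
      show "l2_norm2 (\<lambda>x. u n x - v x) \<le> (\<Sum>x. if Suc n \<le> x then H1 x else 0)"
      proof -
        have pw: "(norm (u n x - v x))^2 \<le> (if Suc n \<le> x then H1 x else 0)" for x
          unfolding u_def H1_def by (rule pb1) simp
        show ?thesis unfolding l2_norm2_def
          using in_l2_diff[OF dom_l2[OF ud] v, of n] tail_eq(1)[OF sH1, of "Suc n"]
          by (intro suminf_le pw) (auto simp: in_l2_def)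
      qed
    qed
  qed
  have c2: "(\<lambda>n. l2_norm2 (\<lambda>x. L0 (u n) x - L0 v x)) \<longlonglongrightarrow> 0"
  proof (rule real_tendsto_sandwich[OF _ _ tendsto_const T2])
    show "\<forall>\<^sub>F n in sequentially. 0 \<le> l2_norm2 (\<lambda>x. L0 (u n) x - L0 v x)"
      by (intro always_eventually allI l2_nonneg in_l2_diff L0_l2 ud Lv)
    show "\<forall>\<^sub>F n in sequentially. l2_norm2 (\<lambda>x. L0 (u n) x - L0 v x) \<le> (\<Sum>x. if Suc n \<le> x then H2 x else 0)"
    proof (intro always_eventually allI)
      fix n
      show "l2_norm2 (\<lambda>x. L0 (u n) x - L0 v x) \<le> (\<Sum>x. if Suc n \<le> x then H2 x else 0)"
      proof -
        have pw: "(norm (L0 (u n) x - L0 v x))^2 \<le> (if Suc n \<le> x then H2 x else 0)" for x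
          unfolding u_def H2_def by (rule pb2) simp
        show ?thesis unfolding l2_norm2_def
          using in_l2_diff[OF L0_l2[OF ud] Lv, of n] tail_eq(1)[OF sH2, of "Suc n"]
          by (intro suminf_le pw) (auto simp: in_l2_def)
      qed
    qed
  qed
  show ?thesis unfolding L0_closure_graph_def
    using v Lv ud c1 c2 by blast
qed



lemma chi0_l2: "in_l2 chi0"
  unfolding in_l2_def by (rule summable_finite[of "{0}"]) (auto simp: chi0_def)

lemma V_graph:
  assumes z: "z \<notin> complex_of_real ` {0..}"
  shows "L0_closure_graph (V z) (\<lambda>x. chi0 x + z * V z x)"
proof -
  have v: "in_l2 (V z)"
    using W_l2[OF z] by (simp add: in_l2_def V_eq_W[OF z])
  have L: "L0 (V z) = (\<lambda>x. chi0 x + z * V z x)"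
    by (rule ext) (rule V_rec[OF z])
  have "in_l2 (L0 (V z))" unfolding L by (intro in_l2_add chi0_l2 in_l2_cmult v)
  from cutoff_graph[OF v this] show ?thesis unfolding L .
qed

lemma psi_eq_V:
  assumes z: "z \<notin> complex_of_real ` {0..}"
  shows "psi z = V z"
  unfolding psi_def
proof (rule the_equality)
  show "L0_closure_graph (V z) (\<lambda>x. chi0 x + z * V z x)" by (rule V_graph[OF z])
  fix v assume "L0_closure_graph v (\<lambda>x. chi0 x + z * v x)"
  then show "v = V z" using graph_unique[OF z _ V_graph[OF z]] by blast
qed

theorem mainTheorem7:
  fixes z :: complex and x :: nat
  assumes "z \<notin> complex_of_real ` {0..}"
  shows "psi z x = exp (- z) *
           (\<Sum>k\<le>x. (-1)^k * of_nat (x choose k) * expint_E (of_nat (k+1)) (- z))"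
  using psi_eq_V[OF assms] rhs_eq_V[OF assms, of x] by simp

end
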